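(* Let $G$ be a finite graph such that no connected component of $\mathcal{I}^1_{\mathrm{AR}}(G)$ is an even cycle. Then the partition $V_1,\dots,V_{\alpha(G)}$ of $V(\mathcal{I}^1_{\mathrm{AR}}(G))$, where $V_i$ is the set of independent sets of $G$ of size $i$, is the unique layering of $\mathcal{I}^1_{\mathrm{AR}}(G)$.
   Context: $\alpha(G)$ is the maximum size of an independent set of $G$. $\mathcal{I}^1_{\mathrm{AR}}(G)$ is the graph whose vertices are the nonempty independent sets of $G$, two being adjacent iff their symmetric difference has exactly one element. A layering of a graph $H$ is a partition of $V(H)$ into an ordered sequence of parts (layers) $V_1,\dots,V_p$ such that: (1) each layer is an independent set of $H$; (2) every edge of $H$ joins vertices in consecutive layers $V_i,V_{i+1}$; (3) for $2\le i\le p$, each vertex of $V_i$ has exactly $i$ neighbours in $V_{i-1}$; (4) for $1\le i\le p$, any two vertices of $V_i$ have at most one common neighbour in $V_{i-1}$ and at most one common neighbour in $V_{i+1}$. *)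

theory Defs
  imports Main
begin

definition simple_graph :: "'a set \<Rightarrow> ('a \<Rightarrow> 'a \<Rightarrow> bool) \<Rightarrow> bool" where
  "simple_graph V E \<longleftrightarrow> (\<forall>x y. E x y \<longrightarrow> x \<in> V \<and> y \<in> V \<and> x \<noteq> y \<and> E y x)"

definition indep_set :: "'a set \<Rightarrow> ('a \<Rightarrow> 'a \<Rightarrow> bool) \<Rightarrow> 'a set \<Rightarrow> bool" where
  "indep_set V E S \<longleftrightarrow> S \<subseteq> V \<and> (\<forall>x\<in>S. \<forall>y\<in>S. \<not> E x y)"

definition indep_number :: "'a set \<Rightarrow> ('a \<Rightarrow> 'a \<Rightarrow> bool) \<Rightarrow> nat" where
  "indep_number V E = Max (card ` {S. indep_set V E S})"

definition IAR_verts :: "'a set \<Rightarrow> ('a \<Rightarrow> 'a \<Rightarrow> bool) \<Rightarrow> 'a set set" where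
  "IAR_verts V E = {S. indep_set V E S \<and> S \<noteq> {}}"

definition IAR_adj :: "'a set \<Rightarrow> 'a set \<Rightarrow> bool" where
  "IAR_adj S T \<longleftrightarrow> card ((S - T) \<union> (T - S)) = 1"

definition component :: "'b set \<Rightarrow> ('b \<Rightarrow> 'b \<Rightarrow> bool) \<Rightarrow> 'b \<Rightarrow> 'b set" where
  "component VH EH x = {y \<in> VH. (\<lambda>a b. a \<in> VH \<and> b \<in> VH \<and> EH a b)\<^sup>*\<^sup>* x y}"

definition is_even_cycle :: "'b set \<Rightarrow> ('b \<Rightarrow> 'b \<Rightarrow> bool) \<Rightarrow> bool" where
  "is_even_cycle C EH \<longleftrightarrow> (\<exists>n f. n \<ge> 3 \<and> even n \<and> bij_betw f {..<n} C \<and>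
     (\<forall>i<n. \<forall>j<n. EH (f i) (f j) \<longleftrightarrow> (j = Suc i mod n \<or> i = Suc j mod n)))"

text \<open>Layering, with layers V_1..V_p stored as a list (index i in the list = layer i+1).\<close>
definition layering :: "'b set \<Rightarrow> ('b \<Rightarrow> 'b \<Rightarrow> bool) \<Rightarrow> 'b set list \<Rightarrow> bool" where
  "layering VH EH Ls \<longleftrightarrow>
     (\<forall>i<length Ls. Ls ! i \<noteq> {}) \<and>
     \<Union>(set Ls) = VH \<and>
     (\<forall>i<length Ls. \<forall>j<length Ls. i \<noteq> j \<longrightarrow> Ls ! i \<inter> Ls ! j = {}) \<and>
     (\<forall>i<length Ls. \<forall>x\<in>Ls ! i. \<forall>y\<in>Ls ! i. \<not> EH x y) \<and>
     (\<forall>x\<in>VH. \<forall>y\<in>VH. EH x y \<longrightarrow>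
        (\<exists>i. Suc i < length Ls \<and>
           ((x \<in> Ls ! i \<and> y \<in> Ls ! Suc i) \<or> (y \<in> Ls ! i \<and> x \<in> Ls ! Suc i)))) \<and>
     (\<forall>i. 1 \<le> i \<and> i < length Ls \<longrightarrow>
        (\<forall>x\<in>Ls ! i. card {y \<in> Ls ! (i - 1). EH x y} = i + 1)) \<and>
     (\<forall>i<length Ls. \<forall>x\<in>Ls ! i. \<forall>y\<in>Ls ! i. x \<noteq> y \<longrightarrow>
        (1 \<le> i \<longrightarrow> card {z \<in> Ls ! (i - 1). EH x z \<and> EH y z} \<le> 1) \<and>
        (Suc i < length Ls \<longrightarrow> card {z \<in> Ls ! Suc i. EH x z \<and> EH y z} \<le> 1))"

end

theory Submission
  imports Defs
begin


primrec walk :: "('b \<Rightarrow> 'b \<Rightarrow> 'b) \<Rightarrow> 'b \<Rightarrow> 'b \<Rightarrow> nat \<Rightarrow> 'b \<times> 'b" where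
  "walk g a b 0 = (a, b)"
| "walk g a b (Suc k) = (snd (walk g a b k), g (snd (walk g a b k)) (fst (walk g a b k)))"

lemma card2_eq:
  assumes "card A = 2" "a \<in> A" "b \<in> A" "a \<noteq> b"
  shows "A = {a, b}"
proof -
  have "finite A" using assms(1) by (metis card.infinite zero_neq_numeral)
  have "{a,b} \<subseteq> A" using assms by auto
  moreover have "card {a,b} = 2" using assms(4) by simp
  ultimately show ?thesis using \<open>finite A\<close> assms(1) by (metis card_subset_eq)
qed

lemma component_closed:
  assumes "y \<in> component VH R x0" "z \<in> VH" "R y z"
  shows "z \<in> component VH R x0"
  using assms unfolding component_def
  by (auto intro: rtranclp.rtrancl_into_rtrancl)

lemma component_sub: "component VH R x0 \<subseteq> VH"
  unfolding component_def by auto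

lemma component_self: "x0 \<in> VH \<Longrightarrow> x0 \<in> component VH R x0"
  unfolding component_def by auto

lemma component_induct:
  assumes "y \<in> component VH R x0" "P x0"
    "\<And>a b. a \<in> VH \<Longrightarrow> b \<in> VH \<Longrightarrow> R a b \<Longrightarrow> P a \<Longrightarrow> P b"
  shows "P y"
proof -
  have "(\<lambda>a b. a \<in> VH \<and> b \<in> VH \<and> R a b)\<^sup>*\<^sup>* x0 y" using assms(1) unfolding component_def by auto
  then show ?thesis
    by (induction rule: rtranclp_induct) (use assms in auto)
qed

lemma cycle_lemma:
  fixes VH :: "'b set" and R :: "'b \<Rightarrow> 'b \<Rightarrow> bool" and col :: "'b \<Rightarrow> bool"
  assumes fin: "finite VH"
    and sym: "\<And>x y. R x y \<Longrightarrow> R y x"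
    and irr: "\<And>x. \<not> R x x"
    and x0: "x0 \<in> VH"
    and deg: "\<And>y. y \<in> component VH R x0 \<Longrightarrow> card {z\<in>VH. R y z} = 2"
    and colr: "\<And>y z. y \<in> component VH R x0 \<Longrightarrow> z \<in> VH \<Longrightarrow> R y z \<Longrightarrow> col y \<noteq> col z"
  shows "is_even_cycle (component VH R x0) R"
proof -
  define C where "C = component VH R x0"
  define N where "N y = {z\<in>VH. R y z}" for y
  have CV: "C \<subseteq> VH" unfolding C_def by (rule component_sub)
  have finC: "finite C" using fin CV finite_subset by blast
  have x0C: "x0 \<in> C" unfolding C_def using x0 by (rule component_self)
  have clos: "z \<in> C" if "y \<in> C" "R y z" "z \<in> VH" for y z
    using that component_closed unfolding C_def by metis
  have degN: "card (N y) = 2" if "y \<in> C" for y using deg that unfolding C_def N_def by auto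
  define oth where "oth y z = (SOME z'. z' \<in> N y \<and> z' \<noteq> z)" for y z
  have oth: "oth y z \<in> N y \<and> oth y z \<noteq> z" if yC: "y \<in> C" for y z
  proof -
    have "\<exists>z'. z' \<in> N y \<and> z' \<noteq> z"
    proof -
      obtain a b where "a \<noteq> b" "N y = {a,b}" using degN[OF yC] card_2_iff by metis
      then show ?thesis by (cases "a = z") auto
    qed
    then show ?thesis unfolding oth_def by (rule someI_ex)
  qed
  obtain y0 where y0: "y0 \<in> N x0"
    using degN[OF x0C] by (metis card.empty ex_in_conv zero_neq_numeral)
  define w where "w k = fst (walk oth x0 y0 k)" for k
  have snd_w: "snd (walk oth x0 y0 k) = w (Suc k)" for k
    unfolding w_def by simp
  have wss: "w (Suc (Suc k)) = oth (w (Suc k)) (w k)" for k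
    unfolding w_def by simp
  have inv: "w k \<in> C \<and> w (Suc k) \<in> N (w k)" for k
  proof (induction k)
    case 0
    then show ?case using x0C y0 unfolding w_def by simp
  next
    case (Suc k)
    then have a: "w (Suc k) \<in> C" using clos unfolding N_def by auto
    show ?case using a oth wss by auto
  qed
  have wC: "w k \<in> C" for k using inv by blast
  have wR: "R (w k) (w (Suc k))" for k using inv unfolding N_def by blast
  have wnb: "w (Suc (Suc k)) \<noteq> w k" for k
  proof -
    show ?thesis using oth wC wss by auto
  qed
  have wV: "w k \<in> VH" for k using wC CV by auto
  have Nw: "N (w (Suc k)) = {w k, w (Suc (Suc k))}" for k
  proof (rule card2_eq)
    show "card (N (w (Suc k))) = 2" using degN[OF wC] .
    show "w k \<in> N (w (Suc k))" using wR[of k] sym wV unfolding N_def by blast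
    show "w (Suc (Suc k)) \<in> N (w (Suc k))" using wR[of "Suc k"] wV unfolding N_def by blast
    show "w k \<noteq> w (Suc (Suc k))" using wnb[of k] by metis
  qed
  have "\<not> inj_on w {0..card C}"
  proof
    assume "inj_on w {0..card C}"
    then have "card (w ` {0..card C}) = card C + 1" by (simp add: card_image)
    moreover have "w ` {0..card C} \<subseteq> C" using wC by auto
    ultimately have "card (w ` {0..card C}) \<le> card C" using card_mono[OF finC] by blast
    then show False using \<open>card (w ` {0..card C}) = card C + 1\<close> by linarith
  qed
  then obtain i0 j0 where ij0: "i0 < j0" "w i0 = w j0"
    unfolding inj_on_def by (metis linorder_neqE_nat)
  define P where "P j = (\<exists>i<j. w i = w j)" for j
  have Pj0: "P j0" using ij0 P_def by auto
  define p where "p = (LEAST j. P j)"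
  have Pp: "P p" using Pj0 p_def by (metis LeastI)
  have minp: "\<not> P j" if "j < p" for j using that p_def not_less_Least by blast
  have injp: "inj_on w {..<p}"
  proof (rule inj_onI)
    fix a b assume "a \<in> {..<p}" "b \<in> {..<p}" "w a = w b"
    then show "a = b" using minp unfolding P_def
      by (metis lessThan_iff linorder_neqE_nat)
  qed
  obtain i where i: "i < p" "w i = w p" using Pp P_def by auto
  have i0: "i = 0"
  proof (rule ccontr)
    assume "i \<noteq> 0"
    then obtain i' where i': "i = Suc i'" by (cases i) auto
    have p1: "p = Suc (p - 1)" using i by auto
    have "w (p - 1) \<in> N (w p)" using wR[of "p-1"] sym p1 wV unfolding N_def by (metis mem_Collect_eq)
    then have "w (p - 1) = w i' \<or> w (p - 1) = w (Suc i)" using Nw[of i'] i i' by simp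
    then show False
    proof
      assume "w (p - 1) = w i'"
      then have "p - 1 = i'" using injp i i' by (intro inj_onD[OF injp]) auto
      then show False using i i' by auto
    next
      assume h: "w (p - 1) = w (Suc i)"
      show False
      proof (cases "Suc i < p")
        case True
        then have "p - 1 = Suc i" using h injp by (intro inj_onD[OF injp]) auto
        then have "p = Suc (Suc i)" by auto
        then show False using wnb[of i] i by auto
      next
        case False
        then have "p = Suc i" using i by auto
        then show False using h wR[of i] irr i by (metis diff_Suc_1)
      qed
    qed
  qed
  have wp: "w p = x0" using i i0 w_def by simp
  have w0: "w 0 = x0" unfolding w_def by simp
  have p3: "3 \<le> p"
  proof -
    have "p \<noteq> 0" using i by auto
    moreover have "p \<noteq> 1"
    proof
      assume "p = 1"
      then have "w 1 = w 0" using wp w0 by simp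
      then show False using wR[of 0] irr by simp
    qed
    moreover have "p \<noteq> 2"
    proof
      assume "p = 2"
      then have "w (Suc (Suc 0)) = w 0" using wp w0 by (simp add: numeral_2_eq_2)
      then show False using wnb[of 0] by simp
    qed
    ultimately show ?thesis by linarith
  qed
  define pr where "pr i = (if i = 0 then p - 1 else i - 1)" for i
  have Rsucc: "R (w i) (w (Suc i mod p))" if "i < p" for i
  proof (cases "Suc i < p")
    case True then show ?thesis using wR by simp
  next
    case False then have "Suc i = p" using that by auto
    then show ?thesis using wR[of i] wp w0 by simp
  qed
  have prlt: "pr i < p" if "i < p" for i using that p3 pr_def by auto
  have sucpr: "Suc (pr i) mod p = i" if "i < p" for i
    using that p3 unfolding pr_def by auto
  have sprne: "Suc i mod p \<noteq> pr i" if "i < p" for i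
  proof -
    have "p \<noteq> 0" using p3 by auto
    show ?thesis using that p3 unfolding pr_def
      by (cases "Suc i < p") (auto simp: mod_if)
  qed
  have Nwi: "N (w i) = {w (Suc i mod p), w (pr i)}" if "i < p" for i
  proof (rule card2_eq)
    show "card (N (w i)) = 2" using degN wC by auto
    show "w (Suc i mod p) \<in> N (w i)" using Rsucc[OF that] wV unfolding N_def by auto
    have "R (w (pr i)) (w i)" using Rsucc[OF prlt[OF that]] sucpr[OF that] by simp
    then show "w (pr i) \<in> N (w i)" using sym wV unfolding N_def by auto
    have "Suc i mod p < p" using p3 by auto
    then show "w (Suc i mod p) \<noteq> w (pr i)"
      using inj_onD[OF injp] sprne[OF that] prlt[OF that] by blast
  qed
  have Sclosed: "C \<subseteq> w ` {..<p}"
  proof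
    fix y assume "y \<in> C"
    then show "y \<in> w ` {..<p}" unfolding C_def
    proof (rule component_induct)
      show "x0 \<in> w ` {..<p}" using w0 p3 by force
    next
      fix a b assume ab: "a \<in> VH" "b \<in> VH" "R a b" "a \<in> w ` {..<p}"
      then obtain k where k: "k < p" "a = w k" by auto
      have "b \<in> N (w k)" using ab k unfolding N_def by auto
      then have "b = w (Suc k mod p) \<or> b = w (pr k)" using Nwi[OF k(1)] by auto
      moreover have "Suc k mod p < p" using p3 by auto
      ultimately show "b \<in> w ` {..<p}" using prlt[OF k(1)] by auto
    qed
  qed
  have bij: "bij_betw w {..<p} C"
    unfolding bij_betw_def using injp Sclosed wC by auto
  have col_alt: "col (w k) = (col x0 = even k)" for k
  proof (induction k)
    case 0 then show ?case using w0 by simp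
  next
    case (Suc k)
    have "col (w k) \<noteq> col (w (Suc k))" using colr wC wR wV unfolding C_def by auto
    then show ?case using Suc by auto
  qed
  have evp: "even p" using col_alt[of p] wp by (cases "col x0") auto
  have adj: "R (w a) (w b) \<longleftrightarrow> (b = Suc a mod p \<or> a = Suc b mod p)" if "a < p" "b < p" for a b
  proof
    assume "R (w a) (w b)"
    then have "w b \<in> N (w a)" using wV unfolding N_def by auto
    then have "w b = w (Suc a mod p) \<or> w b = w (pr a)" using Nwi[OF that(1)] by auto
    moreover have "Suc a mod p < p" using p3 by auto
    ultimately have "b = Suc a mod p \<or> b = pr a"
      using inj_onD[OF injp] prlt[OF that(1)] that by blast
    then show "b = Suc a mod p \<or> a = Suc b mod p" using sucpr[OF that(1)] by auto
  next
    assume "b = Suc a mod p \<or> a = Suc b mod p"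
    then show "R (w a) (w b)" using Rsucc that sym by auto
  qed
  show ?thesis unfolding is_even_cycle_def C_def[symmetric]
    using p3 evp bij adj by blast
qed



lemma adj_sym: "IAR_adj x y = IAR_adj y x"
  unfolding IAR_adj_def by (simp add: Un_commute)

lemma adj_irr: "\<not> IAR_adj x x"
  unfolding IAR_adj_def by simp

lemma adj_iff:
  assumes "finite x" "finite y"
  shows "IAR_adj x y \<longleftrightarrow> (\<exists>a\<in>x. y = x - {a}) \<or> (\<exists>b. b \<notin> x \<and> y = insert b x)"
proof
  assume "IAR_adj x y"
  then obtain c where c: "(x - y) \<union> (y - x) = {c}" unfolding IAR_adj_def using card_1_singletonE by blast
  show "(\<exists>a\<in>x. y = x - {a}) \<or> (\<exists>b. b \<notin> x \<and> y = insert b x)"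
  proof (cases "c \<in> x")
    case True
    then have "y = x - {c}" using c by (simp add: set_eq_iff) (metis)
    then show ?thesis using True by blast
  next
    case False
    then have "y = insert c x" using c by (simp add: set_eq_iff) (metis)
    then show ?thesis using False by blast
  qed
next
  assume "(\<exists>a\<in>x. y = x - {a}) \<or> (\<exists>b. b \<notin> x \<and> y = insert b x)"
  then show "IAR_adj x y"
  proof
    assume "\<exists>a\<in>x. y = x - {a}"
    then obtain a where "a \<in> x" "y = x - {a}" by blast
    then have "(x - y) \<union> (y - x) = {a}" by blast
    then show ?thesis unfolding IAR_adj_def by simp
  next
    assume "\<exists>b. b \<notin> x \<and> y = insert b x"
    then obtain b where "b \<notin> x" "y = insert b x" by blast
    then have "(x - y) \<union> (y - x) = {b}" by blast
    then show ?thesis unfolding IAR_adj_def by simp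
  qed
qed

lemma adj_rem: "a \<in> x \<Longrightarrow> IAR_adj x (x - {a})"
proof -
  assume "a \<in> x"
  then have "(x - (x - {a})) \<union> ((x - {a}) - x) = {a}" by blast
  then show ?thesis unfolding IAR_adj_def by simp
qed

lemma adj_ins: "b \<notin> x \<Longrightarrow> IAR_adj x (insert b x)"
proof -
  assume "b \<notin> x"
  then have "(x - insert b x) \<union> (insert b x - x) = {b}" by blast
  then show ?thesis unfolding IAR_adj_def by simp
qed

locale lay =
  fixes V :: "'a set" and E :: "'a \<Rightarrow> 'a \<Rightarrow> bool" and Ls :: "'a set set list"
  assumes finV: "finite V"
    and layL: "layering (IAR_verts V E) IAR_adj Ls"
begin

abbreviation "VH \<equiv> IAR_verts V E"
abbreviation "adj \<equiv> IAR_adj"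

definition lev :: "'a set \<Rightarrow> nat" where
  "lev x = (THE i. i < length Ls \<and> x \<in> Ls ! i)"

lemma VH_iff: "x \<in> VH \<longleftrightarrow> x \<subseteq> V \<and> x \<noteq> {} \<and> (\<forall>a\<in>x. \<forall>b\<in>x. \<not> E a b)"
  unfolding IAR_verts_def indep_set_def by auto

lemma VH_fin: "x \<in> VH \<Longrightarrow> finite x"
  using VH_iff finV finite_subset by blast

lemma VH_ne: "x \<in> VH \<Longrightarrow> x \<noteq> {}"
  using VH_iff by blast

lemma VH_card: "x \<in> VH \<Longrightarrow> card x \<ge> 1"
  using VH_fin VH_ne by (simp add: Suc_leI card_gt_0_iff)

lemma VH_sub: "x \<in> VH \<Longrightarrow> y \<subseteq> x \<Longrightarrow> y \<noteq> {} \<Longrightarrow> y \<in> VH"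
  unfolding VH_iff by blast

lemma finVH: "finite VH"
proof -
  have "VH \<subseteq> Pow V" using VH_iff by blast
  moreover have "finite (Pow V)" using finV by simp
  ultimately show ?thesis by (rule finite_subset)
qed

lemma adjV_iff:
  assumes "x \<in> VH" "y \<in> VH"
  shows "adj x y \<longleftrightarrow> (\<exists>a\<in>x. y = x - {a}) \<or> (\<exists>b. b \<notin> x \<and> y = insert b x)"
  using assms by (simp add: adj_iff VH_fin)

lemma adj_cases:
  assumes "x \<in> VH" "y \<in> VH" "adj x y"
  obtains a where "a \<in> x" "y = x - {a}" | b where "b \<notin> x" "y = insert b x"
  using adjV_iff assms by metis

lemma layer_facts_1: "\<forall>i<length Ls. Ls ! i \<noteq> {}"
  using layL unfolding layering_def by (elim conjE) assumption

lemma layer_facts_2: "\<Union>(set Ls) = VH"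
  using layL unfolding layering_def by (elim conjE) assumption

lemma layer_facts_3: "\<forall>i<length Ls. \<forall>j<length Ls. i \<noteq> j \<longrightarrow> Ls ! i \<inter> Ls ! j = {}"
  using layL unfolding layering_def by (elim conjE) assumption

lemma layer_facts_4: "\<forall>i<length Ls. \<forall>x\<in>Ls ! i. \<forall>y\<in>Ls ! i. \<not> adj x y"
  using layL unfolding layering_def by (elim conjE) assumption

lemma layer_facts_5: "\<forall>x\<in>VH. \<forall>y\<in>VH. adj x y \<longrightarrow>
        (\<exists>i. Suc i < length Ls \<and> ((x \<in> Ls ! i \<and> y \<in> Ls ! Suc i) \<or> (y \<in> Ls ! i \<and> x \<in> Ls ! Suc i)))"
  using layL unfolding layering_def by (elim conjE) assumption

lemma layer_facts_6: "\<forall>i. 1 \<le> i \<and> i < length Ls \<longrightarrow> (\<forall>x\<in>Ls ! i. card {y \<in> Ls ! (i - 1). adj x y} = i + 1)"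
  using layL unfolding layering_def by (elim conjE) assumption

lemma layer_facts_7: "\<forall>i<length Ls. \<forall>x\<in>Ls ! i. \<forall>y\<in>Ls ! i. x \<noteq> y \<longrightarrow>
        (1 \<le> i \<longrightarrow> card {z \<in> Ls ! (i - 1). adj x z \<and> adj y z} \<le> 1) \<and>
        (Suc i < length Ls \<longrightarrow> card {z \<in> Ls ! Suc i. adj x z \<and> adj y z} \<le> 1)"
  using layL unfolding layering_def by (elim conjE) assumption

lemmas layer_facts = layer_facts_1 layer_facts_2 layer_facts_3 layer_facts_4 layer_facts_5 layer_facts_6 layer_facts_7

lemma Ls_sub: "i < length Ls \<Longrightarrow> Ls ! i \<subseteq> VH"
  using layer_facts(2) nth_mem by blast

lemma lev_eq: "i < length Ls \<Longrightarrow> x \<in> Ls ! i \<Longrightarrow> lev x = i"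
  unfolding lev_def
proof (rule the_equality)
  assume "i < length Ls" "x \<in> Ls ! i"
  then show "i < length Ls \<and> x \<in> Ls ! i" by simp
  fix j assume "j < length Ls \<and> x \<in> Ls ! j"
  then show "j = i" using layer_facts(3) \<open>i < length Ls\<close> \<open>x \<in> Ls ! i\<close> by blast
qed

lemma lev_ok: "x \<in> VH \<Longrightarrow> lev x < length Ls \<and> x \<in> Ls ! lev x"
proof -
  assume "x \<in> VH"
  then obtain L where "L \<in> set Ls" "x \<in> L" using layer_facts(2) by blast
  then obtain i where "i < length Ls" "Ls ! i = L" by (meson in_set_conv_nth)
  then show ?thesis using lev_eq \<open>x \<in> L\<close> by auto
qed

lemma layer_eq: "i < length Ls \<Longrightarrow> Ls ! i = {y\<in>VH. lev y = i}"
  using Ls_sub lev_eq lev_ok by blast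

lemma layer_fin: "i < length Ls \<Longrightarrow> finite (Ls ! i)"
  using Ls_sub finVH finite_subset by blast

lemma L1: "x \<in> VH \<Longrightarrow> y \<in> VH \<Longrightarrow> adj x y \<Longrightarrow> lev y = Suc (lev x) \<or> lev x = Suc (lev y)"
proof -
  assume a: "x \<in> VH" "y \<in> VH" "adj x y"
  then obtain i where i: "Suc i < length Ls" "(x \<in> Ls ! i \<and> y \<in> Ls ! Suc i) \<or> (y \<in> Ls ! i \<and> x \<in> Ls ! Suc i)"
    using layer_facts_5 by blast
  have "i < length Ls" using i by simp
  then show ?thesis using i lev_eq by metis
qed

definition dn :: "'a set \<Rightarrow> 'a set set" where
  "dn x = {y\<in>VH. adj x y \<and> Suc (lev y) = lev x}"

lemma L2: "x \<in> VH \<Longrightarrow> 1 \<le> lev x \<Longrightarrow> card (dn x) = Suc (lev x)"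
proof -
  assume x: "x \<in> VH" "1 \<le> lev x"
  have "lev x < length Ls" using lev_ok x by blast
  then have "card {y \<in> Ls ! (lev x - 1). adj x y} = lev x + 1"
    using layer_facts(6) x lev_ok by blast
  moreover have "{y \<in> Ls ! (lev x - 1). adj x y} = dn x"
    using layer_eq[of "lev x - 1"] \<open>lev x < length Ls\<close> x unfolding dn_def by auto
  ultimately show ?thesis by simp
qed

lemma dn_fin: "finite (dn x)"
  using finVH unfolding dn_def by auto

lemma opp:
  assumes "p \<in> VH" "q \<in> VH" "p \<noteq> q" "lev p = lev q" "r \<in> VH" "u \<in> VH" "r \<noteq> u"
    "adj p r" "adj q r" "adj p u" "adj q u"
  shows "lev r \<noteq> lev u"
proof
  assume eq: "lev r = lev u"
  have lp: "lev p < length Ls" "p \<in> Ls ! lev p" using lev_ok[OF assms(1)] by auto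
  have lq: "q \<in> Ls ! lev p" using lev_ok[OF assms(2)] assms(4) by simp
  have "lev r = Suc (lev p) \<or> lev p = Suc (lev r)" using L1[OF assms(1,5,8)] by blast
  then show False
  proof
    assume h: "lev r = Suc (lev p)"
    then have "Suc (lev p) < length Ls" using lev_ok[OF assms(5)] by simp
    then have "card {z \<in> Ls ! Suc (lev p). adj p z \<and> adj q z} \<le> 1"
      using layer_facts_7 lp lq assms(3) by blast
    moreover have "r \<in> Ls ! Suc (lev p)" using lev_ok[OF assms(5)] h by simp
    moreover have "u \<in> Ls ! Suc (lev p)" using lev_ok[OF assms(6)] h eq by simp
    ultimately have "card {z \<in> Ls ! Suc (lev p). adj p z \<and> adj q z} \<le> 1"
      "{r, u} \<subseteq> {z \<in> Ls ! Suc (lev p). adj p z \<and> adj q z}"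
      using assms(8-11) by auto
    moreover have "finite {z \<in> Ls ! Suc (lev p). adj p z \<and> adj q z}"
      using finite_subset[OF Collect_subset layer_fin[OF \<open>Suc (lev p) < length Ls\<close>]] .
    ultimately have "card {r, u} \<le> 1" by (meson card_mono order_trans)
    then show False using assms(7) by simp
  next
    assume h: "lev p = Suc (lev r)"
    then have "1 \<le> lev p" by simp
    then have "card {z \<in> Ls ! (lev p - 1). adj p z \<and> adj q z} \<le> 1"
      using layer_facts_7 lp lq assms(3) by blast
    moreover have "r \<in> Ls ! (lev p - 1)" using lev_ok[OF assms(5)] h by simp
    moreover have "u \<in> Ls ! (lev p - 1)" using lev_ok[OF assms(6)] h eq by simp
    ultimately have "card {z \<in> Ls ! (lev p - 1). adj p z \<and> adj q z} \<le> 1"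
      "{r, u} \<subseteq> {z \<in> Ls ! (lev p - 1). adj p z \<and> adj q z}"
      using assms(8-11) by auto
    moreover have "finite {z \<in> Ls ! (lev p - 1). adj p z \<and> adj q z}"
    proof -
      have "lev p - 1 < length Ls" using lp(1) by simp
      then show ?thesis by (rule finite_subset[OF Collect_subset layer_fin])
    qed
    ultimately have "card {r, u} \<le> 1" by (meson card_mono order_trans)
    then show False using assms(7) by simp
  qed
qed

end

context lay begin

lemma adj_symI: "adj x y \<Longrightarrow> adj y x"
  using adj_sym by metis

lemma adjVs: "x \<in> VH \<Longrightarrow> y \<in> VH \<Longrightarrow> adj x y \<Longrightarrow> adj y x"
  using adj_sym by blast

lemma cube:
  fixes \<phi> :: "'a set \<Rightarrow> 'a set" and Dd :: "'a set" and \<delta> :: int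
  assumes fin: "finite Dd"
    and phiV: "\<And>B. B \<subseteq> Dd \<Longrightarrow> \<phi> B \<in> VH"
    and phiinj: "\<And>B1 B2. B1 \<subseteq> Dd \<Longrightarrow> B2 \<subseteq> Dd \<Longrightarrow> \<phi> B1 = \<phi> B2 \<Longrightarrow> B1 = B2"
    and phiadj: "\<And>B a. B \<subseteq> Dd \<Longrightarrow> a \<in> Dd \<Longrightarrow> a \<notin> B \<Longrightarrow> adj (\<phi> B) (\<phi> (insert a B))"
    and base: "\<And>a. a \<in> Dd \<Longrightarrow> int (lev (\<phi> {a})) = int (lev (\<phi> {})) + \<delta>"
    and dl: "\<delta> = 1 \<or> \<delta> = -1"
  shows "B \<subseteq> Dd \<Longrightarrow> int (lev (\<phi> B)) = int (lev (\<phi> {})) + \<delta> * int (card B)"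
proof (induction "card B" arbitrary: B rule: less_induct)
  case (less B)
  have finB: "finite B" using less.prems fin finite_subset by blast
  show ?case
  proof (cases "card B \<le> 1")
    case True
    then have "card B = 0 \<or> card B = 1" by linarith
    then show ?thesis
    proof
      assume "card B = 0"
      then have "B = {}" using finB by simp
      then show ?thesis by simp
    next
      assume "card B = 1"
      then obtain a where "B = {a}" using card_1_singletonE by blast
      then show ?thesis using base less.prems by simp
    qed
  next
    case False
    then have c2: "card B \<ge> 2" by simp
    then obtain a where a: "a \<in> B" using finB by (metis card.empty ex_in_conv not_numeral_le_zero)
    have "card (B - {a}) \<ge> 1" using c2 a finB by simp
    then obtain b where b: "b \<in> B - {a}"
      by (metis card.empty ex_in_conv not_one_le_zero)
    define B1 where "B1 = B - {a}"
    define B2 where "B2 = B - {b}"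
    define B0 where "B0 = B - {a, b}"
    have ab: "a \<noteq> b" "b \<in> B" using b by auto
    have cB1: "card B1 = card B - 1" unfolding B1_def using a finB by simp
    have cB2: "card B2 = card B - 1" unfolding B2_def using ab finB by simp
    have cB0: "card B0 = card B - 2" unfolding B0_def using a ab finB by (simp add: card_Diff_subset)
    have sub: "B1 \<subseteq> Dd" "B2 \<subseteq> Dd" "B0 \<subseteq> Dd" "B \<subseteq> Dd"
      using less.prems unfolding B1_def B2_def B0_def by auto
    have l1: "int (lev (\<phi> B1)) = int (lev (\<phi> {})) + \<delta> * int (card B1)"
      using less.hyps[of B1] cB1 c2 sub by simp
    have l2: "int (lev (\<phi> B2)) = int (lev (\<phi> {})) + \<delta> * int (card B2)"
      using less.hyps[of B2] cB2 c2 sub by simp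
    have l0: "int (lev (\<phi> B0)) = int (lev (\<phi> {})) + \<delta> * int (card B0)"
      using less.hyps[of B0] cB0 c2 sub by simp
    have i1: "B1 = insert b B0" "b \<notin> B0" unfolding B1_def B0_def using ab by auto
    have i2: "B2 = insert a B0" "a \<notin> B0" unfolding B2_def B0_def using a ab by auto
    have i3: "B = insert a B1" "a \<notin> B1" unfolding B1_def using a by auto
    have i4: "B = insert b B2" "b \<notin> B2" unfolding B2_def using ab by auto
    have Vs: "\<phi> B1 \<in> VH" "\<phi> B2 \<in> VH" "\<phi> B0 \<in> VH" "\<phi> B \<in> VH" using phiV sub by auto
    have "adj (\<phi> B0) (\<phi> B1)"
      using phiadj[of B0 b] i1 sub by auto
    then have a1: "adj (\<phi> B1) (\<phi> B0)" by (simp add: adj_sym)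
    have "adj (\<phi> B0) (\<phi> B2)"
      using phiadj[of B0 a] i2 sub by auto
    then have a2: "adj (\<phi> B2) (\<phi> B0)" by (simp add: adj_sym)
    have a3: "adj (\<phi> B1) (\<phi> B)"
      using phiadj[of B1 a] i3 sub by auto
    have a4: "adj (\<phi> B2) (\<phi> B)"
      using phiadj[of B2 b] i4 sub by auto
    have ne12: "\<phi> B1 \<noteq> \<phi> B2"
    proof
      assume "\<phi> B1 = \<phi> B2"
      then have "B1 = B2" using phiinj sub by blast
      then show False using i2 i3 by auto
    qed
    have ne0: "\<phi> B0 \<noteq> \<phi> B"
    proof
      assume "\<phi> B0 = \<phi> B"
      then have "B0 = B" using phiinj sub by blast
      then show False using i2 a by auto
    qed
    have eq12: "lev (\<phi> B1) = lev (\<phi> B2)" using l1 l2 cB1 cB2 by simp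
    have "lev (\<phi> B0) \<noteq> lev (\<phi> B)"
      using opp[OF Vs(1) Vs(2) ne12 eq12 Vs(3) Vs(4) ne0 a1 a2 a3 a4] .
    moreover have "lev (\<phi> B) = Suc (lev (\<phi> B1)) \<or> lev (\<phi> B1) = Suc (lev (\<phi> B))"
      using L1[OF Vs(1) Vs(4) a3] .
    moreover have "int (card B1) = int (card B) - 1" "int (card B0) = int (card B) - 2"
      using cB1 cB0 c2 by auto
    ultimately show ?thesis using l1 l0 dl by (auto simp: algebra_simps)
  qed
qed

lemma cube_add:
  assumes F: "F \<in> VH" and finA: "finite A" and disj: "A \<inter> F = {}" and FA: "F \<union> A \<in> VH"
    and base: "\<And>a. a \<in> A \<Longrightarrow> int (lev (insert a F)) = int (lev F) + \<delta>"
    and dl: "\<delta> = 1 \<or> \<delta> = -1"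
    and B: "B \<subseteq> A"
  shows "int (lev (F \<union> B)) = int (lev F) + \<delta> * int (card B)"
proof -
  have "int (lev ((\<lambda>B. F \<union> B) B)) = int (lev ((\<lambda>B. F \<union> B) {})) + \<delta> * int (card B)"
  proof (rule cube[where \<phi>="\<lambda>B. F \<union> B", OF finA _ _ _ _ dl B])
    fix B assume "B \<subseteq> A"
    show "F \<union> B \<in> VH"
    proof (rule VH_sub[OF FA])
      show "F \<union> B \<subseteq> F \<union> A" using \<open>B \<subseteq> A\<close> by blast
      show "F \<union> B \<noteq> {}" using VH_ne[OF F] by simp
    qed
  next
    fix B1 B2 assume "B1 \<subseteq> A" "B2 \<subseteq> A" "F \<union> B1 = F \<union> B2"
    then show "B1 = B2" using disj by blast
  next
    fix B a assume "B \<subseteq> A" "a \<in> A" "a \<notin> B"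
    then have "a \<notin> F \<union> B" using disj by blast
    then have "adj (F \<union> B) (insert a (F \<union> B))" by (rule adj_ins)
    then show "adj (F \<union> B) (F \<union> insert a B)" by simp
  next
    fix a assume "a \<in> A"
    then show "int (lev (F \<union> {a})) = int (lev (F \<union> {})) + \<delta>" using base by simp
  qed
  then show ?thesis by simp
qed

lemma cube_rem:
  assumes X: "X \<in> VH" and R: "R \<subseteq> X" and ne: "X - R \<noteq> {}"
    and base: "\<And>a. a \<in> R \<Longrightarrow> int (lev (X - {a})) = int (lev X) + \<delta>"
    and dl: "\<delta> = 1 \<or> \<delta> = -1"
    and B: "B \<subseteq> R"
  shows "int (lev (X - B)) = int (lev X) + \<delta> * int (card B)"
proof -
  have finR: "finite R" using R VH_fin[OF X] finite_subset by blast
  have "int (lev ((\<lambda>B. X - B) B)) = int (lev ((\<lambda>B. X - B) {})) + \<delta> * int (card B)"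
  proof (rule cube[where \<phi>="\<lambda>B. X - B", OF finR _ _ _ _ dl B])
    fix B assume "B \<subseteq> R"
    show "X - B \<in> VH"
    proof (rule VH_sub[OF X])
      show "X - B \<subseteq> X" by blast
      show "X - B \<noteq> {}" using ne \<open>B \<subseteq> R\<close> by blast
    qed
  next
    fix B1 B2 assume "B1 \<subseteq> R" "B2 \<subseteq> R" "X - B1 = X - B2"
    then show "B1 = B2" using R by blast
  next
    fix B a assume "B \<subseteq> R" "a \<in> R" "a \<notin> B"
    then have "a \<in> X - B" using R by blast
    then have "adj (X - B) ((X - B) - {a})" by (rule adj_rem)
    moreover have "(X - B) - {a} = X - insert a B" by blast
    ultimately show "adj (X - B) (X - insert a B)" by simp
  next
    fix a assume "a \<in> R"
    then show "int (lev (X - {a})) = int (lev (X - {})) + \<delta>" using base by simp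
  qed
  then show ?thesis by simp
qed

lemma lev0_nb: "x \<in> VH \<Longrightarrow> y \<in> VH \<Longrightarrow> adj x y \<Longrightarrow> lev x = 0 \<Longrightarrow> lev y = 1"
  using L1 by fastforce

lemma L0sing:
  assumes X: "X \<in> VH" and l0: "lev X = 0" and a: "a \<in> X"
  shows "lev {a} = card X - 1"
proof -
  have "int (lev (X - (X - {a}))) = int (lev X) + 1 * int (card (X - {a}))"
  proof (rule cube_rem[OF X _ _ _ _ subset_refl])
    show "X - {a} \<subseteq> X" by blast
    show "X - (X - {a}) \<noteq> {}" using a by blast
    show "(1::int) = 1 \<or> (1::int) = -1" by simp
    fix c assume c: "c \<in> X - {a}"
    have "X - {c} \<in> VH" using a c by (intro VH_sub[OF X]) auto
    moreover have "adj X (X - {c})" using c by (intro adj_rem) blast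
    ultimately have "lev (X - {c}) = 1" using lev0_nb X l0 by blast
    then show "int (lev (X - {c})) = int (lev X) + 1" using l0 by simp
  qed
  moreover have "X - (X - {a}) = {a}" using a by blast
  moreover have "card (X - {a}) = card X - 1" using a VH_fin[OF X] by simp
  ultimately show ?thesis using l0 by simp
qed

lemma facet:
  assumes S: "S \<in> VH" and l0: "lev S = 0" and c2: "card S \<ge> 2" and b: "b \<notin> S"
    and T: "insert b S \<in> VH"
  shows False
proof -
  define T where "T = insert b S"
  have TV: "T \<in> VH" using T T_def by simp
  have aST: "adj S T" unfolding T_def using b by (rule adj_ins)
  have lT: "lev T = 1" using lev0_nb[OF S TV aST l0] .
  have finS: "finite S" using VH_fin[OF S] .
  have h1: "lev (insert b (S - {a})) = 2" if a: "a \<in> S" for a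
  proof -
    define u where "u = insert b (S - {a})"
    have ab: "a \<noteq> b" using a b by blast
    have uT: "u = T - {a}" unfolding u_def T_def using ab by blast
    have uV: "u \<in> VH" unfolding uT by (rule VH_sub[OF TV]) (use ab in \<open>auto simp: T_def\<close>)
    have aTu: "adj T u" unfolding uT using a T_def by (intro adj_rem) blast
    have "lev u = Suc (lev T) \<or> lev T = Suc (lev u)" using L1[OF TV uV aTu] .
    then have "lev u = 2 \<or> lev u = 0" using lT by auto
    moreover have "lev u \<noteq> 0"
    proof
      assume lu: "lev u = 0"
      define p where "p = S - {a}"
      have "card p \<ge> 1" unfolding p_def using c2 a finS by simp
      then have pne: "p \<noteq> {}" by auto
      have pV: "p \<in> VH" using pne unfolding p_def by (intro VH_sub[OF S]) auto
      have aSp: "adj S p" unfolding p_def using a by (rule adj_rem)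
      have lp: "lev p = 1" using lev0_nb[OF S pV aSp l0] .
      have pq: "p \<noteq> T"
      proof
        assume "p = T"
        then have "b \<in> p" by (simp add: T_def)
        then show False using b p_def by simp
      qed
      have ru: "S \<noteq> u"
      proof
        assume "S = u"
        moreover have "b \<in> u" by (simp add: u_def)
        ultimately have "b \<in> S" by simp
        then show False using b by simp
      qed
      have a1: "adj p S" using aSp by (rule adj_symI)
      have a2: "adj T S" using aST by (rule adj_symI)
      have a3: "adj p u" unfolding u_def p_def[symmetric] using b p_def by (intro adj_ins) simp
      have "lev S \<noteq> lev u" using opp[OF pV TV pq _ S uV ru a1 a2 a3 aTu] lp lT by simp
      then show False using l0 lu by simp
    qed
    ultimately show ?thesis unfolding u_def by simp
  qed
  have "card (dn T) = 2" using L2[OF TV] lT by simp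
  moreover have "S \<in> dn T" unfolding dn_def using S adj_symI[OF aST] lT l0 by simp
  ultimately have "dn T \<noteq> {S}" by auto
  then obtain y where y: "y \<in> dn T" "y \<noteq> S" using \<open>S \<in> dn T\<close> by blast
  have yV: "y \<in> VH" and aTy: "adj T y" and ly: "lev y = 0" using y lT unfolding dn_def by auto
  from adj_cases[OF TV yV aTy] show False
  proof cases
    case (1 c)
    show False
    proof (cases "c = b")
      case True
      then have "y = S" using 1 b unfolding T_def by auto
      then show False using y by simp
    next
      case False
      then have "c \<in> S" using 1 T_def by simp
      then have "lev (insert b (S - {c})) = 2" using h1 by simp
      moreover have "y = insert b (S - {c})" using 1 False unfolding T_def by auto
      ultimately show False using ly by simp
    qed
  next
    case (2 t)
    define q where "q = insert t S"
    have tb: "t \<noteq> b" "t \<notin> S" using 2 T_def by auto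
    have qV: "q \<in> VH" using 2 unfolding q_def T_def by (intro VH_sub[OF yV]) auto
    have aSq: "adj S q" unfolding q_def using tb by (intro adj_ins)
    have lq: "lev q = 1" using lev0_nb[OF S qV aSq l0] .
    have pq: "T \<noteq> q"
    proof
      assume "T = q"
      moreover have "b \<in> T" by (simp add: T_def)
      ultimately have "b \<in> q" by simp
      then show False using b tb q_def by simp
    qed
    have ru: "S \<noteq> y" using y by simp
    have a2: "adj q S" using aSq by (rule adj_symI)
    have a1: "adj T S" using aST by (rule adj_symI)
    have yq: "y = insert b q" unfolding q_def using 2 T_def by auto
    have a4: "adj q y" unfolding yq using b tb unfolding q_def by (intro adj_ins) simp
    have "lev S \<noteq> lev y" using opp[OF TV qV pq _ S yV ru a1 a2 aTy a4] lq lT by simp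
    then show False using l0 ly by simp
  qed
qed

end

context lay begin

definition D :: "'a set \<Rightarrow> int" where "D x = int (lev x) + 1 - int (card x)"
definition MM :: int where "MM = Max (D ` VH)"
definition mm :: int where "mm = Min (D ` VH)"

lemma D_le: "x \<in> VH \<Longrightarrow> D x \<le> MM"
  unfolding MM_def using finVH by simp

lemma D_ge: "x \<in> VH \<Longrightarrow> mm \<le> D x"
  unfolding mm_def using finVH by simp

lemma MM_att: "VH \<noteq> {} \<Longrightarrow> \<exists>x\<in>VH. D x = MM"
proof -
  assume "VH \<noteq> {}"
  then have "Max (D ` VH) \<in> D ` VH" using finVH by (intro Max_in) auto
  then show ?thesis unfolding MM_def by auto
qed

lemma mm_att: "VH \<noteq> {} \<Longrightarrow> \<exists>x\<in>VH. D x = mm"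
proof -
  assume "VH \<noteq> {}"
  then have "Min (D ` VH) \<in> D ` VH" using finVH by (intro Min_in) auto
  then show ?thesis unfolding mm_def by auto
qed

lemma rem_V: "x \<in> VH \<Longrightarrow> a \<in> x \<Longrightarrow> card x \<ge> 2 \<Longrightarrow> x - {a} \<in> VH"
proof -
  assume x: "x \<in> VH" "a \<in> x" "card x \<ge> 2"
  then have "card (x - {a}) \<ge> 1" using VH_fin by simp
  then have "x - {a} \<noteq> {}" by (metis card.empty not_one_le_zero)
  then show ?thesis by (intro VH_sub[OF x(1)]) auto
qed

lemma ins_sub_V: "insert b x \<in> VH \<Longrightarrow> y \<subseteq> insert b x \<Longrightarrow> b \<in> y \<Longrightarrow> y \<in> VH"
  by (rule VH_sub, assumption) auto

lemma P1:
  assumes x: "x \<in> VH" and Dx: "D x = MM" and a: "a \<in> x" and k2: "card x \<ge> 2"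
  shows "Suc (lev (x - {a})) = lev x \<and> D (x - {a}) = MM"
proof -
  have yV: "x - {a} \<in> VH" using rem_V x a k2 by blast
  have ax: "adj x (x - {a})" using a by (rule adj_rem)
  have cy: "int (card (x - {a})) = int (card x) - 1" using a VH_fin[OF x] k2 by simp
  have "lev (x - {a}) = Suc (lev x) \<or> lev x = Suc (lev (x - {a}))" using L1[OF x yV ax] .
  moreover have "lev (x - {a}) \<noteq> Suc (lev x)"
  proof
    assume "lev (x - {a}) = Suc (lev x)"
    then have "D (x - {a}) = D x + 2" unfolding D_def using cy by simp
    then show False using D_le[OF yV] Dx by simp
  qed
  ultimately have "lev x = Suc (lev (x - {a}))" by blast
  then show ?thesis unfolding D_def using Dx cy by (simp add: D_def)
qed

lemma card_two_images:
  assumes "finite x" "finite W" "W \<inter> x = {}"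
  shows "card ((\<lambda>a. x - {a}) ` x \<union> (\<lambda>b. insert b x) ` W) = card x + card W"
proof -
  have i1: "inj_on (\<lambda>a. x - {a}) x" by (rule inj_onI) blast
  have i2: "inj_on (\<lambda>b. insert b x) W"
  proof (rule inj_onI)
    fix a b assume "a \<in> W" "b \<in> W" "insert a x = insert b x"
    then show "a = b" using assms(3) by blast
  qed
  have dj: "(\<lambda>a. x - {a}) ` x \<inter> (\<lambda>b. insert b x) ` W = {}"
  proof (rule ccontr)
    assume "(\<lambda>a. x - {a}) ` x \<inter> (\<lambda>b. insert b x) ` W \<noteq> {}"
    then obtain a b where "a \<in> x" "b \<in> W" "x - {a} = insert b x" by blast
    then show False by blast
  qed
  have "card ((\<lambda>a. x - {a}) ` x \<union> (\<lambda>b. insert b x) ` W) = card ((\<lambda>a. x - {a}) ` x) + card ((\<lambda>b. insert b x) ` W)"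
    using card_Un_disjoint[OF finite_imageI[OF assms(1)] finite_imageI[OF assms(2)] dj] .
  also have "\<dots> = card x + card W" using card_image[OF i1] card_image[OF i2] by simp
  finally show ?thesis .
qed

lemma VH_subV: "x \<in> VH \<Longrightarrow> x \<subseteq> V"
  using VH_iff by simp

lemma VH_pairs: "x \<in> VH \<Longrightarrow> a \<in> x \<Longrightarrow> b \<in> x \<Longrightarrow> \<not> E a b"
  using VH_iff[of x] by blast

lemma Zarg:
  assumes x: "x \<in> VH" and Dx: "D x = MM" and M1: "MM \<ge> 1" and k2: "card x \<ge> 2"
    and maxl: "\<And>b. b \<notin> x \<Longrightarrow> insert b x \<in> VH \<Longrightarrow> D (insert b x) \<noteq> MM"
  shows False
proof -
  define W where "W = {b. b \<notin> x \<and> insert b x \<in> VH}"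
  have finx: "finite x" using VH_fin[OF x] .
  have WV: "W \<subseteq> V"
  proof
    fix b assume "b \<in> W"
    then have "insert b x \<in> VH" unfolding W_def by simp
    then show "b \<in> V" using VH_subV by blast
  qed
  have finW: "finite W" using WV finV finite_subset by blast
  have Wx: "W \<inter> x = {}" unfolding W_def by blast
  have Wins: "insert w x \<in> VH" "w \<notin> x" if "w \<in> W" for w using that unfolding W_def by auto
  have levx: "int (lev x) = MM + int (card x) - 1" using Dx unfolding D_def by simp
  have ext_dn: "Suc (lev (insert w x)) = lev x" if w: "w \<in> W" for w
  proof -
    have "lev (insert w x) = Suc (lev x) \<or> lev x = Suc (lev (insert w x))"
      using L1[OF x Wins(1)[OF w] adj_ins[OF Wins(2)[OF w]]] .
    moreover have "lev (insert w x) \<noteq> Suc (lev x)"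
    proof
      assume "lev (insert w x) = Suc (lev x)"
      then have "D (insert w x) = MM" using Dx Wins(2)[OF w] finx unfolding D_def by simp
      then show False using maxl Wins w by blast
    qed
    ultimately show ?thesis by simp
  qed
  have sub_dn: "Suc (lev (x - {a})) = lev x" if "a \<in> x" for a using P1[OF x Dx that k2] by blast
  have dnx: "dn x = (\<lambda>a. x - {a}) ` x \<union> (\<lambda>b. insert b x) ` W"
  proof
    show "dn x \<subseteq> (\<lambda>a. x - {a}) ` x \<union> (\<lambda>b. insert b x) ` W"
    proof
      fix y assume y: "y \<in> dn x"
      then have yV: "y \<in> VH" and axy: "adj x y" unfolding dn_def by auto
      from adj_cases[OF x yV axy] show "y \<in> (\<lambda>a. x - {a}) ` x \<union> (\<lambda>b. insert b x) ` W"
      proof cases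
        case (1 a) then show ?thesis by blast
      next
        case (2 b) then have "b \<in> W" using yV unfolding W_def by simp
        then show ?thesis using 2 by blast
      qed
    qed
  next
    show "(\<lambda>a. x - {a}) ` x \<union> (\<lambda>b. insert b x) ` W \<subseteq> dn x"
    proof
      fix y assume "y \<in> (\<lambda>a. x - {a}) ` x \<union> (\<lambda>b. insert b x) ` W"
      then show "y \<in> dn x"
      proof
        assume "y \<in> (\<lambda>a. x - {a}) ` x"
        then obtain a where a: "a \<in> x" "y = x - {a}" by blast
        then show "y \<in> dn x" unfolding dn_def using rem_V[OF x a(1) k2] adj_rem[OF a(1)] sub_dn[OF a(1)] by simp
      next
        assume "y \<in> (\<lambda>b. insert b x) ` W"
        then obtain w where w: "w \<in> W" "y = insert w x" by blast
        then show "y \<in> dn x" unfolding dn_def using Wins[OF w(1)] adj_ins ext_dn[OF w(1)] by simp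
      qed
    qed
  qed
  have lx1: "1 \<le> lev x" using levx M1 k2 by linarith
  have cW: "int (card W) = MM"
  proof -
    have "card (dn x) = card x + card W" unfolding dnx using card_two_images[OF finx finW Wx] .
    moreover have "card (dn x) = Suc (lev x)" using L2[OF x lx1] .
    ultimately show ?thesis using levx by linarith
  qed
  have Wne: "W \<noteq> {}" using cW M1 by auto
  have mix: "lev (insert w (x - {a})) + 2 = lev x" if w: "w \<in> W" and a: "a \<in> x" for w a
  proof -
    define u where "u = insert w (x - {a})"
    have aw: "a \<noteq> w" using Wins(2)[OF w] a by blast
    have uT: "u = insert w x - {a}" unfolding u_def using aw by blast
    have uV: "u \<in> VH" unfolding u_def by (rule ins_sub_V[OF Wins(1)[OF w]]) auto
    have aTu: "adj (insert w x) u" unfolding uT by (rule adj_rem) (use a in simp)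
    have "lev u = Suc (lev (insert w x)) \<or> lev (insert w x) = Suc (lev u)"
      using L1[OF Wins(1)[OF w] uV aTu] .
    moreover have "lev u \<noteq> Suc (lev (insert w x))"
    proof
      assume lu: "lev u = Suc (lev (insert w x))"
      have rV: "x - {a} \<in> VH" using rem_V[OF x a k2] .
      have pq: "x \<noteq> u"
      proof
        assume "x = u" then have "a \<in> u" using a by simp
        then show False unfolding uT by simp
      qed
      have ru: "x - {a} \<noteq> insert w x" using Wins(2)[OF w] by blast
      have a1: "adj x (x - {a})" using a by (rule adj_rem)
      have a2: "adj u (x - {a})" unfolding u_def by (rule adj_symI, rule adj_ins) (use Wins(2)[OF w] in simp)
      have a3: "adj x (insert w x)" using Wins(2)[OF w] by (rule adj_ins)
      have "insert w x = insert a u" unfolding u_def using a by blast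
      moreover have "a \<notin> u" unfolding uT by simp
      ultimately have a4: "adj u (insert w x)" by (simp add: adj_ins)
      have "lev (x - {a}) \<noteq> lev (insert w x)"
        using opp[OF x uV pq _ rV Wins(1)[OF w] ru a1 a2 a3 a4] lu ext_dn[OF w] by simp
      then show False using sub_dn[OF a] ext_dn[OF w] by simp
    qed
    ultimately show ?thesis unfolding u_def using ext_dn[OF w] by simp
  qed
  have pair: "lev (insert w' (insert w x)) + 2 = lev x"
    if w: "w \<in> W" and w': "w' \<in> W" and ne: "w \<noteq> w'" and V2: "insert w' (insert w x) \<in> VH" for w w'
  proof -
    define u where "u = insert w' (insert w x)"
    have uV: "u \<in> VH" using V2 u_def by simp
    have nw': "w' \<notin> insert w x" using Wins(2)[OF w'] ne by simp
    have nw: "w \<notin> insert w' x" using Wins(2)[OF w] ne by simp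
    have pq: "insert w x \<noteq> insert w' x" using Wins(2)[OF w] ne by blast
    have eql: "lev (insert w x) = lev (insert w' x)" using ext_dn[OF w] ext_dn[OF w'] by simp
    have ru: "x \<noteq> u" unfolding u_def using Wins(2)[OF w] by blast
    have a1: "adj (insert w x) x" by (rule adj_symI, rule adj_ins, rule Wins(2)[OF w])
    have a2: "adj (insert w' x) x" by (rule adj_symI, rule adj_ins, rule Wins(2)[OF w'])
    have a3: "adj (insert w x) u" unfolding u_def by (rule adj_ins[OF nw'])
    have "u = insert w (insert w' x)" unfolding u_def by blast
    then have a4: "adj (insert w' x) u" using adj_ins[OF nw] by simp
    have "lev x \<noteq> lev u" using opp[OF Wins(1)[OF w] Wins(1)[OF w'] pq eql x uV ru a1 a2 a3 a4] .
    moreover have "lev u = Suc (lev (insert w x)) \<or> lev (insert w x) = Suc (lev u)"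
      using L1[OF Wins(1)[OF w] uV a3] .
    ultimately show ?thesis unfolding u_def using ext_dn[OF w] by auto
  qed
  have compat: "insert w' (insert w x) \<in> VH" if w: "w \<in> W" and w': "w' \<in> W" and ne: "w \<noteq> w'" for w w'
  proof -
    define Cw where "Cw = {w' \<in> W - {w}. insert w' (insert w x) \<in> VH}"
    have finCw: "finite Cw" unfolding Cw_def using finW by simp
    define T where "T = insert w x"
    have TV: "T \<in> VH" unfolding T_def using Wins(1)[OF w] .
    have wx: "w \<notin> x" using Wins(2)[OF w] .
    have dnT: "dn T = (\<lambda>a. insert w (x - {a})) ` x \<union> (\<lambda>w'. insert w' T) ` Cw"
    proof
      show "dn T \<subseteq> (\<lambda>a. insert w (x - {a})) ` x \<union> (\<lambda>w'. insert w' T) ` Cw"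
      proof
        fix y assume y: "y \<in> dn T"
        then have yV: "y \<in> VH" and aTy: "adj T y" and ly: "Suc (lev y) = lev T" unfolding dn_def by auto
        from adj_cases[OF TV yV aTy] show "y \<in> (\<lambda>a. insert w (x - {a})) ` x \<union> (\<lambda>w'. insert w' T) ` Cw"
        proof cases
          case (1 c)
          show ?thesis
          proof (cases "c = w")
            case True
            then have "y = x" using 1 wx unfolding T_def by auto
            then show ?thesis using ly ext_dn[OF w] unfolding T_def by simp
          next
            case False
            then have "c \<in> x" "y = insert w (x - {c})" using 1 unfolding T_def by auto
            then show ?thesis by blast
          qed
        next
          case (2 t)
          have "insert t x \<in> VH"
            by (rule ins_sub_V[of t T]) (use 2 yV in \<open>auto simp: T_def\<close>)
          then have "t \<in> W" "t \<noteq> w" using 2 unfolding W_def T_def by auto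
          then have "t \<in> Cw" unfolding Cw_def using 2 yV T_def by simp
          then show ?thesis using 2 by blast
        qed
      qed
    next
      show "(\<lambda>a. insert w (x - {a})) ` x \<union> (\<lambda>w'. insert w' T) ` Cw \<subseteq> dn T"
      proof
        fix y assume "y \<in> (\<lambda>a. insert w (x - {a})) ` x \<union> (\<lambda>w'. insert w' T) ` Cw"
        then show "y \<in> dn T"
        proof
          assume "y \<in> (\<lambda>a. insert w (x - {a})) ` x"
          then obtain a where a: "a \<in> x" "y = insert w (x - {a})" by blast
          have aw: "a \<noteq> w" using a wx by blast
          have yT: "y = T - {a}" unfolding T_def a(2) using aw by blast
          have "y \<in> VH" unfolding a(2) by (rule ins_sub_V[OF Wins(1)[OF w]]) auto
          moreover have "adj T y" unfolding yT by (rule adj_rem) (simp add: T_def a)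
          moreover have "Suc (lev y) = lev T" using mix[OF w a(1)] ext_dn[OF w] unfolding T_def a(2) by simp
          ultimately show "y \<in> dn T" unfolding dn_def by simp
        next
          assume "y \<in> (\<lambda>w'. insert w' T) ` Cw"
          then obtain v where v: "v \<in> Cw" "y = insert v T" by blast
          have vW: "v \<in> W" "v \<noteq> w" "insert v T \<in> VH" using v(1) unfolding Cw_def T_def by auto
          have "v \<notin> T" unfolding T_def using Wins(2)[OF vW(1)] vW(2) by simp
          then have "adj T y" unfolding v(2) by (rule adj_ins)
          moreover have "Suc (lev y) = lev T"
            using pair[OF w vW(1) _ ] vW ext_dn[OF w] unfolding v(2) T_def by simp
          ultimately show "y \<in> dn T" unfolding dn_def using vW(3) v(2) by simp
        qed
      qed
    qed
    have cdn: "card (dn T) = card x + card Cw"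
    proof -
      have i1: "inj_on (\<lambda>a. insert w (x - {a})) x"
      proof (rule inj_onI)
        fix a b assume ab: "a \<in> x" "b \<in> x" "insert w (x - {a}) = insert w (x - {b})"
        show "a = b"
        proof (rule ccontr)
          assume "a \<noteq> b"
          then have "a \<in> insert w (x - {b})" using ab(1) by blast
          moreover have "a \<notin> insert w (x - {a})" using ab(1) wx by blast
          ultimately show False using ab(3) by simp
        qed
      qed
      have i2: "inj_on (\<lambda>w'. insert w' T) Cw"
      proof (rule inj_onI)
        fix a b assume ab: "a \<in> Cw" "b \<in> Cw" "insert a T = insert b T"
        have "a \<notin> T" "b \<notin> T" using ab(1,2) Wins(2) unfolding Cw_def T_def by auto
        then show "a = b" using ab(3) by blast
      qed
      have dj: "(\<lambda>a. insert w (x - {a})) ` x \<inter> (\<lambda>w'. insert w' T) ` Cw = {}"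
      proof (rule ccontr)
        assume "(\<lambda>a. insert w (x - {a})) ` x \<inter> (\<lambda>w'. insert w' T) ` Cw \<noteq> {}"
        then obtain a v where "a \<in> x" "v \<in> Cw" "insert w (x - {a}) = insert v T" by blast
        then have "a \<in> insert w (x - {a})" unfolding T_def by blast
        then show False using wx \<open>a \<in> x\<close> by blast
      qed
      show ?thesis unfolding dnT
        using card_Un_disjoint[OF finite_imageI[OF finx] finite_imageI[OF finCw] dj]
          card_image[OF i1] card_image[OF i2] by simp
    qed
    have lT1: "1 \<le> lev T" using ext_dn[OF w] levx M1 k2 unfolding T_def by linarith
    have "card (dn T) = Suc (lev T)" using L2[OF TV lT1] .
    then have "int (card Cw) = int (lev x) - int (card x)" using cdn ext_dn[OF w] unfolding T_def by simp
    then have "card Cw = card (W - {w})" using levx cW w finW by simp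
    moreover have "Cw \<subseteq> W - {w}" unfolding Cw_def by blast
    ultimately have "Cw = W - {w}" using finW by (intro card_subset_eq) auto
    then have "w' \<in> Cw" using w' ne by blast
    then show ?thesis unfolding Cw_def by simp
  qed
  define Z where "Z = x \<union> W"
  have ZV: "Z \<in> VH"
  proof -
    have "Z \<subseteq> V" unfolding Z_def using WV VH_subV[OF x] by blast
    moreover have "Z \<noteq> {}" unfolding Z_def using VH_ne[OF x] by blast
    moreover have "\<forall>p\<in>Z. \<forall>q\<in>Z. \<not> E p q"
    proof (intro ballI)
      fix p q assume pq: "p \<in> Z" "q \<in> Z"
      show "\<not> E p q"
      proof (cases "p \<in> x")
        case px: True
        show ?thesis
        proof (cases "q \<in> x")
          case True then show ?thesis using VH_pairs[OF x] px by blast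
        next
          case False then have "q \<in> W" using pq Z_def by blast
          then show ?thesis using VH_pairs[OF Wins(1)] px by blast
        qed
      next
        case pW: False
        then have pW: "p \<in> W" using pq Z_def by blast
        show ?thesis
        proof (cases "q \<in> x")
          case True then show ?thesis using VH_pairs[OF Wins(1)[OF pW]] by blast
        next
          case False then have qW: "q \<in> W" using pq Z_def by blast
          show ?thesis
          proof (cases "p = q")
            case True then show ?thesis using VH_pairs[OF Wins(1)[OF pW]] by blast
          next
            case False
            then show ?thesis using VH_pairs[OF compat[OF pW qW False]] by blast
          qed
        qed
      qed
    qed
    ultimately show ?thesis using VH_iff[of Z] by blast
  qed
  have cube1: "int (lev (x \<union> B)) = int (lev x) + (-1) * int (card B)" if "B \<subseteq> W" for B
  proof (rule cube_add[OF x finW Wx])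
    show "x \<union> W \<in> VH" using ZV Z_def by simp
    show "(-1::int) = 1 \<or> (-1::int) = -1" by simp
    show "B \<subseteq> W" using that .
    fix a assume "a \<in> W"
    then show "int (lev (insert a x)) = int (lev x) + - 1" using ext_dn by force
  qed
  have lZ: "int (lev Z) = int (card x) - 1" using cube1[of W] levx cW unfolding Z_def by simp
  have noext: False if t: "t \<notin> Z" "insert t Z \<in> VH" for t
  proof -
    have "insert t x \<in> VH" by (rule ins_sub_V[OF t(2)]) (auto simp: Z_def)
    then have "t \<in> W" using t(1) unfolding W_def Z_def by simp
    then show False using t(1) Z_def by simp
  qed
  have lZ1: "1 \<le> lev Z" using lZ k2 by linarith
  have dnZ: "dn Z \<subseteq> (\<lambda>a. Z - {a}) ` x"
  proof
    fix y assume y: "y \<in> dn Z"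
    then have yV: "y \<in> VH" and aZy: "adj Z y" and ly: "Suc (lev y) = lev Z" unfolding dn_def by auto
    from adj_cases[OF ZV yV aZy] show "y \<in> (\<lambda>a. Z - {a}) ` x"
    proof cases
      case (1 c)
      show ?thesis
      proof (cases "c \<in> x")
        case True then show ?thesis using 1 by blast
      next
        case False
        then have cW': "c \<in> W" using 1 Z_def by blast
        have "y = x \<union> (W - {c})" using 1 False unfolding Z_def by blast
        then have "int (lev y) = int (lev x) - int (card (W - {c}))" using cube1[of "W - {c}"] by simp
        moreover have "int (card (W - {c})) = MM - 1"
        proof -
          have "card W > 0" using cW' finW by (auto simp: card_gt_0_iff)
          then show ?thesis using cW cW' finW by (simp add: of_nat_diff)
        qed
        ultimately show ?thesis using ly lZ levx by simp
      qed
    next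
      case (2 b) then show ?thesis using noext yV by blast
    qed
  qed
  have "card (dn Z) = card x" using L2[OF ZV lZ1] lZ by simp
  moreover have "card ((\<lambda>a. Z - {a}) ` x) \<le> card x" using card_image_le[OF finx] .
  moreover have "finite ((\<lambda>a. Z - {a}) ` x)" using finx by simp
  ultimately have dnZe: "dn Z = (\<lambda>a. Z - {a}) ` x"
    using dnZ by (metis card_seteq)
  have cube2: "int (lev (Z - x)) = int (lev Z) + (-1) * int (card x)"
  proof (rule cube_rem[OF ZV])
    show "x \<subseteq> Z" unfolding Z_def by blast
    show "Z - x \<noteq> {}" unfolding Z_def using Wne Wx by blast
    show "(-1::int) = 1 \<or> (-1::int) = -1" by simp
    show "x \<subseteq> x" by simp
    fix a assume "a \<in> x"
    then have "Z - {a} \<in> dn Z" using dnZe by blast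
    then show "int (lev (Z - {a})) = int (lev Z) + - 1" unfolding dn_def by force
  qed
  then show False using lZ by simp
qed

end

context lay begin

lemma DM_single:
  assumes x: "x \<in> VH" and Dx: "D x = MM" and M1: "MM \<ge> 1"
  shows "card x = 1"
proof -
  define Y where "Y = {z \<in> VH. D z = MM \<and> x \<subseteq> z}"
  have finY: "finite Y" unfolding Y_def using finVH by simp
  have xY: "x \<in> Y" unfolding Y_def using x Dx by simp
  define c where "c = Max (card ` Y)"
  have "c \<in> card ` Y" unfolding c_def using finY xY by (intro Max_in) auto
  then obtain y where yY: "y \<in> Y" and cy: "card y = c" by auto
  have cmax: "card z \<le> card y" if "z \<in> Y" for z using that finY cy unfolding c_def by simp
  have yV: "y \<in> VH" "D y = MM" "x \<subseteq> y" using yY unfolding Y_def by auto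
  have "\<not> card y \<ge> 2"
  proof
    assume "card y \<ge> 2"
    show False
    proof (rule Zarg[OF yV(1) yV(2) M1 \<open>card y \<ge> 2\<close>])
      fix b assume b: "b \<notin> y" "insert b y \<in> VH"
      show "D (insert b y) \<noteq> MM"
      proof
        assume "D (insert b y) = MM"
        then have "insert b y \<in> Y" unfolding Y_def using b yV by auto
        then have "card (insert b y) \<le> card y" using cmax by blast
        then show False using b VH_fin[OF yV(1)] by simp
      qed
    qed
  qed
  moreover have "card x \<le> card y" using yV VH_fin card_mono by blast
  moreover have "card x \<ge> 1" using VH_card[OF x] .
  ultimately show ?thesis by linarith
qed

lemma D_sing: "D {v} = int (lev {v})" unfolding D_def by simp

lemma sing_ext:
  assumes v: "{v} \<in> VH" and Dv: "D {v} = MM" and M1: "MM \<ge> 1" and w: "w \<noteq> v" and vw: "insert w {v} \<in> VH"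
  shows "Suc (lev (insert w {v})) = lev {v}"
proof -
  have "lev (insert w {v}) = Suc (lev {v}) \<or> lev {v} = Suc (lev (insert w {v}))"
    using L1[OF v vw adj_ins] w by simp
  moreover have "lev (insert w {v}) \<noteq> Suc (lev {v})"
  proof
    assume "lev (insert w {v}) = Suc (lev {v})"
    then have "D (insert w {v}) = MM" using Dv w unfolding D_def by simp
    then have "card (insert w {v}) = 1" using DM_single[OF vw _ M1] by simp
    then show False using w by simp
  qed
  ultimately show ?thesis by simp
qed

lemma sing_nbrs:
  assumes v: "{v} \<in> VH" and Dv: "D {v} = MM" and M1: "MM \<ge> 1"
  defines "W \<equiv> {w. w \<noteq> v \<and> insert w {v} \<in> VH}"
  shows "{z \<in> VH. adj {v} z} = dn {v}" and "dn {v} = (\<lambda>w. insert w {v}) ` W"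
    and "int (card W) = MM + 1"
proof -
  have nb: "z \<in> (\<lambda>w. insert w {v}) ` W" if z: "z \<in> VH" "adj {v} z" for z
  proof -
    from adj_cases[OF v z(1) z(2)] show ?thesis
    proof cases
      case (1 a) then have "z = {}" by auto
      then show ?thesis using VH_ne z by blast
    next
      case (2 b) then show ?thesis unfolding W_def using z by auto
    qed
  qed
  have Wd: "(\<lambda>w. insert w {v}) ` W \<subseteq> dn {v}"
  proof
    fix z assume "z \<in> (\<lambda>w. insert w {v}) ` W"
    then obtain w where w: "w \<in> W" "z = insert w {v}" by blast
    have "w \<noteq> v" "insert w {v} \<in> VH" using w(1) W_def by auto
    then show "z \<in> dn {v}" unfolding dn_def w(2) using sing_ext[OF v Dv M1] adj_ins[of w "{v}"] by simp
  qed
  show e1: "{z \<in> VH. adj {v} z} = dn {v}"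
  proof
    show "{z \<in> VH. adj {v} z} \<subseteq> dn {v}" using nb Wd by blast
    show "dn {v} \<subseteq> {z \<in> VH. adj {v} z}" unfolding dn_def by blast
  qed
  show e2: "dn {v} = (\<lambda>w. insert w {v}) ` W"
  proof
    show "dn {v} \<subseteq> (\<lambda>w. insert w {v}) ` W" using nb unfolding dn_def by blast
    show "(\<lambda>w. insert w {v}) ` W \<subseteq> dn {v}" using Wd .
  qed
  have inj: "inj_on (\<lambda>w. insert w {v}) W"
  proof (rule inj_onI)
    fix a b assume "a \<in> W" "b \<in> W" "insert a {v} = insert b {v}"
    then show "a = b" unfolding W_def by (metis doubleton_eq_iff mem_Collect_eq)
  qed
  have "lev {v} \<ge> 1" using Dv M1 D_sing by simp
  then have "card (dn {v}) = Suc (lev {v})" using L2[OF v] by simp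
  then have "card W = Suc (lev {v})" using e2 card_image[OF inj] by simp
  then show "int (card W) = MM + 1" using Dv D_sing by simp
qed

lemma M_le1:
  assumes ne: "VH \<noteq> {}" and M2: "MM \<ge> 2"
  shows False
proof -
  have M1: "MM \<ge> 1" using M2 by simp
  obtain x where x: "x \<in> VH" "D x = MM" using MM_att[OF ne] by blast
  have "card x = 1" using DM_single[OF x M1] .
  then obtain v where xv: "x = {v}" using card_1_singletonE by blast
  have v: "{v} \<in> VH" "D {v} = MM" using x xv by auto
  define W where "W = {w. w \<noteq> v \<and> insert w {v} \<in> VH}"
  have cW: "int (card W) = MM + 1" using sing_nbrs(3)[OF v M1] W_def by simp
  have lv: "int (lev {v}) = MM" using v(2) D_sing by simp
  have WV: "W \<subseteq> V"
  proof
    fix b assume "b \<in> W"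
    then have "insert b {v} \<in> VH" unfolding W_def by simp
    then show "b \<in> V" using VH_subV by blast
  qed
  have finW: "finite W" using WV finV finite_subset by blast
  have vW: "v \<notin> W" unfolding W_def by simp
  have Wins: "w \<noteq> v" "insert w {v} \<in> VH" if "w \<in> W" for w using that W_def by auto
  have extl: "int (lev (insert w {v})) = MM - 1" if "w \<in> W" for w
    using sing_ext[OF v M1 Wins[OF that]] lv by simp
  define K where "K = {A. A \<subseteq> W \<and> insert v A \<in> VH}"
  have finK: "finite K" unfolding K_def using finW by simp
  have eK: "{} \<in> K" unfolding K_def using v by simp
  define c where "c = Max (card ` K)"
  have "c \<in> card ` K" unfolding c_def using finK eK by (intro Max_in) auto
  then obtain A where AK: "A \<in> K" and cA: "card A = c" by auto
  have cmax: "card B \<le> card A" if "B \<in> K" for B using that finK cA unfolding c_def by simp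
  have AW: "A \<subseteq> W" and XV: "insert v A \<in> VH" using AK K_def by auto
  have finA: "finite A" using AW finW finite_subset by blast
  have vA: "v \<notin> A" using AW vW by blast
  define X where "X = insert v A"
  have cubeA: "int (lev ({v} \<union> B)) = int (lev {v}) + (-1) * int (card B)" if "B \<subseteq> A" for B
  proof (rule cube_add[OF v(1) finA])
    show "A \<inter> {v} = {}" using vA by blast
    show "{v} \<union> A \<in> VH" using XV by simp
    show "(-1::int) = 1 \<or> (-1::int) = -1" by simp
    show "B \<subseteq> A" using that .
    fix a assume "a \<in> A"
    then show "int (lev (insert a {v})) = int (lev {v}) + - 1" using extl lv AW by auto
  qed
  have lX: "int (lev X) = MM - int (card A)" using cubeA[of A] lv unfolding X_def by simp
  have facX: False if t: "t \<notin> X" "insert t X \<in> VH" for t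
  proof -
    have "insert t {v} \<in> VH" by (rule ins_sub_V[OF t(2)]) (auto simp: X_def)
    then have tW: "t \<in> W" using t(1) unfolding W_def X_def by simp
    have "insert v (insert t A) = insert t X" unfolding X_def by blast
    then have "insert t A \<in> K" unfolding K_def using tW AW t(2) by simp
    then have "card (insert t A) \<le> card A" using cmax by blast
    then show False using t(1) finA unfolding X_def by simp
  qed
  have XV': "X \<in> VH" using XV X_def by simp
  have lX0: "lev X = 0"
  proof (rule ccontr)
    assume "lev X \<noteq> 0"
    then have l1: "1 \<le> lev X" by simp
    have "dn X \<subseteq> {A}"
    proof
      fix y assume y: "y \<in> dn X"
      then have yV: "y \<in> VH" and aXy: "adj X y" and ly: "Suc (lev y) = lev X" unfolding dn_def by auto
      from adj_cases[OF XV' yV aXy] show "y \<in> {A}"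
      proof cases
        case (1 c)
        show ?thesis
        proof (cases "c = v")
          case True then show ?thesis using 1 vA unfolding X_def by auto
        next
          case False
          then have cA': "c \<in> A" using 1 X_def by simp
          have "y = {v} \<union> (A - {c})" using 1 False unfolding X_def by blast
          then have "int (lev y) = int (lev {v}) - int (card (A - {c}))" using cubeA[of "A - {c}"] by simp
          moreover have "card A > 0" using cA' finA by (auto simp: card_gt_0_iff)
          then have "int (card (A - {c})) = int (card A) - 1" using cA' finA by (simp add: of_nat_diff)
          ultimately show ?thesis using ly lX lv by simp
        qed
      next
        case (2 b) then show ?thesis using facX yV by blast
      qed
    qed
    then have "card (dn X) \<le> 1" by (metis card.empty card_insert_disjoint card_mono empty_iff finite.emptyI finite.insertI le_zero_eq One_nat_def subset_singletonD order_refl)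
    moreover have "card (dn X) = Suc (lev X)" using L2[OF XV' l1] .
    ultimately show False using l1 by simp
  qed
  have cAM: "int (card A) = MM" using lX lX0 by simp
  have "W - A \<noteq> {}"
  proof
    assume "W - A = {}"
    then have "W \<subseteq> A" by blast
    then have "card W \<le> card A" using finA card_mono by blast
    then show False using cW cAM by simp
  qed
  then obtain u where u: "u \<in> W" "u \<notin> A" by blast
  have compat: "insert u (insert a {v}) \<in> VH" if a: "a \<in> A" for a
  proof -
    have aW: "a \<in> W" using a AW by blast
    have la: "lev {a} = card X - 1" using L0sing[OF XV' lX0] a X_def by simp
    have cX: "card X = card A + 1" unfolding X_def using vA finA by simp
    have la': "int (lev {a}) = MM" using la cX cAM by simp
    define P where "P = insert a {v}"
    have PV: "P \<in> VH" using Wins[OF aW] P_def by simp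
    have lP: "int (lev P) = MM - 1" using extl[OF aW] P_def by simp
    have lP1: "1 \<le> lev P" using lP M2 by simp
    define Ca where "Ca = {t \<in> W - {a}. insert t P \<in> VH}"
    have finCa: "finite Ca" unfolding Ca_def using finW by simp
    have dnP: "dn P \<subseteq> (\<lambda>t. insert t P) ` Ca"
    proof
      fix y assume y: "y \<in> dn P"
      then have yV: "y \<in> VH" and aPy: "adj P y" and ly: "Suc (lev y) = lev P" unfolding dn_def by auto
      from adj_cases[OF PV yV aPy] show "y \<in> (\<lambda>t. insert t P) ` Ca"
      proof cases
        case (1 c)
        have "c = a \<or> c = v" using 1 P_def by simp
        then show ?thesis
        proof
          assume "c = a"
          then have "y = {v}" using 1 Wins(1)[OF aW] P_def by auto
          then show ?thesis using ly lP lv by simp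
        next
          assume "c = v"
          then have "y = {a}" using 1 Wins(1)[OF aW] P_def by auto
          then show ?thesis using ly lP la' by simp
        qed
      next
        case (2 t)
        have "insert t {v} \<in> VH" by (rule ins_sub_V[of t P]) (use 2 yV in \<open>auto simp: P_def\<close>)
        then have "t \<in> W" "t \<noteq> a" using 2 unfolding W_def P_def by auto
        then have "t \<in> Ca" unfolding Ca_def using 2 yV by simp
        then show ?thesis using 2 by blast
      qed
    qed
    have "card (dn P) = Suc (lev P)" using L2[OF PV lP1] .
    then have "int (card (dn P)) = MM" using lP by simp
    moreover have "card (dn P) \<le> card Ca"
      using card_mono[OF finite_imageI[OF finCa] dnP] card_image_le[OF finCa, of "\<lambda>t. insert t P"] by linarith
    moreover have "int (card (W - {a})) = MM"
    proof -
      have "card W > 0" using aW finW by (auto simp: card_gt_0_iff)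
      then show ?thesis using cW aW finW by (simp add: of_nat_diff)
    qed
    moreover have "Ca \<subseteq> W - {a}" unfolding Ca_def by blast
    ultimately have "Ca = W - {a}" using finW card_mono[OF _ \<open>Ca \<subseteq> W - {a}\<close>]
      by (metis card_subset_eq finite_Diff le_antisym of_nat_eq_iff)
    then have "u \<in> Ca" using u a by blast
    then show ?thesis unfolding Ca_def P_def by simp
  qed
  have uA: "insert u A \<in> K"
  proof -
    have "insert v (insert u A) \<in> VH"
    proof -
      have "insert v (insert u A) \<subseteq> V" using VH_subV[OF XV] WV u unfolding X_def by blast
      moreover have "\<forall>p\<in>insert v (insert u A). \<forall>q\<in>insert v (insert u A). \<not> E p q"
      proof (intro ballI)
        fix p q assume p: "p \<in> insert v (insert u A)" and q: "q \<in> insert v (insert u A)"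
        have uv: "insert u {v} \<in> VH" using Wins(2)[OF u(1)] .
        show "\<not> E p q"
        proof (cases "p = u")
          case pu: True
          show ?thesis
          proof (cases "q \<in> insert v A")
            case True
            then have "q = v \<or> q \<in> A" by simp
            then show ?thesis
            proof
              assume "q = v" then show ?thesis using VH_pairs[OF uv] pu by simp
            next
              assume "q \<in> A" then show ?thesis using VH_pairs[OF compat[OF \<open>q \<in> A\<close>]] pu by simp
            qed
          next
            case False then have "q = u" using q by simp
            then show ?thesis using VH_pairs[OF uv] pu by simp
          qed
        next
          case pu: False
          then have pX: "p \<in> insert v A" using p by simp
          show ?thesis
          proof (cases "q = u")
            case True
            have "p = v \<or> p \<in> A" using pX by simp
            then show ?thesis
            proof
              assume "p = v" then show ?thesis using VH_pairs[OF uv] True by simp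
            next
              assume "p \<in> A" then show ?thesis using VH_pairs[OF compat[OF \<open>p \<in> A\<close>]] True by simp
            qed
          next
            case False
            then have "q \<in> insert v A" using q by simp
            then show ?thesis using VH_pairs[OF XV] pX by blast
          qed
        qed
      qed
      ultimately show ?thesis using VH_iff[of "insert v (insert u A)"] by blast
    qed
    then show ?thesis unfolding K_def using AW u by simp
  qed
  then have "card (insert u A) \<le> card A" using cmax by blast
  then show False using u finA by simp
qed

lemma card_rem_int: "finite z \<Longrightarrow> a \<in> z \<Longrightarrow> int (card (z - {a})) = int (card z) - 1"
proof -
  assume "finite z" "a \<in> z"
  then have "card z > 0" by (auto simp: card_gt_0_iff)
  then show ?thesis using \<open>finite z\<close> \<open>a \<in> z\<close> by (simp add: of_nat_diff)
qed

lemma m_min: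
  assumes x: "x \<in> VH" and Dx: "D x = mm"
  shows "\<exists>z. z \<in> VH \<and> z \<subseteq> x \<and> D z = mm \<and> lev z = 0"
proof -
  define Y where "Y = {z \<in> VH. z \<subseteq> x \<and> D z = mm}"
  have finY: "finite Y" unfolding Y_def using finVH by simp
  have xY: "x \<in> Y" unfolding Y_def using x Dx by simp
  define c where "c = Min (card ` Y)"
  have "c \<in> card ` Y" unfolding c_def using finY xY by (intro Min_in) auto
  then obtain z where zY: "z \<in> Y" and cz: "card z = c" by auto
  have cmin: "card z \<le> card y" if "y \<in> Y" for y using that finY cz unfolding c_def by simp
  have zV: "z \<in> VH" "z \<subseteq> x" "D z = mm" using zY unfolding Y_def by auto
  have "lev z = 0"
  proof (rule ccontr)
    assume "lev z \<noteq> 0"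
    then have l1: "1 \<le> lev z" by simp
    have "card (dn z) = Suc (lev z)" using L2[OF zV(1) l1] .
    then have "dn z \<noteq> {}" by auto
    then obtain y where y: "y \<in> dn z" by blast
    then have yV: "y \<in> VH" and azy: "adj z y" and ly: "Suc (lev y) = lev z" unfolding dn_def by auto
    from adj_cases[OF zV(1) yV azy] show False
    proof cases
      case (1 a)
      have cy: "int (card y) = int (card z) - 1" using 1 card_rem_int[OF VH_fin[OF zV(1)]] by simp
      then have "D y = mm" using zV(3) ly unfolding D_def by simp
      then have "y \<in> Y" unfolding Y_def using yV 1 zV(2) by auto
      then have "card z \<le> card y" using cmin by blast
      then show False using cy by simp
    next
      case (2 b)
      then have "int (card y) = int (card z) + 1" using VH_fin[OF zV(1)] by simp
      then have "D y = mm - 2" using zV(3) ly unfolding D_def by simp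
      then show False using D_ge[OF yV] by simp
    qed
  qed
  then show ?thesis using zV by blast
qed

lemma m_neg:
  assumes m1: "mm \<le> -1" and x: "x \<in> VH" and Dx: "D x = mm"
  shows "lev x = 0" "int (card x) = 1 - mm" "\<And>t. t \<notin> x \<Longrightarrow> insert t x \<notin> VH"
proof -
  obtain z where z: "z \<in> VH" "z \<subseteq> x" "D z = mm" "lev z = 0" using m_min[OF x Dx] by blast
  have cz: "int (card z) = 1 - mm" using z(3,4) unfolding D_def by simp
  then have c2: "card z \<ge> 2" using m1 by simp
  have zx: "z = x"
  proof (rule ccontr)
    assume "z \<noteq> x"
    then obtain b where b: "b \<in> x" "b \<notin> z" using z(2) by blast
    have "insert b z \<in> VH" by (rule VH_sub[OF x]) (use b z(2) in auto)
    then show False using facet[OF z(1) z(4) c2 b(2)] by simp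
  qed
  show "lev x = 0" using z zx by simp
  show "int (card x) = 1 - mm" using cz zx by simp
  fix t assume "t \<notin> x"
  then show "insert t x \<notin> VH" using facet[OF z(1) z(4) c2] zx by blast
qed

lemma m_M:
  assumes m1: "mm \<le> -1" and ne: "VH \<noteq> {}"
  shows "- mm \<le> MM"
proof -
  obtain x where x: "x \<in> VH" "D x = mm" using mm_att[OF ne] by blast
  have l0: "lev x = 0" and cx: "int (card x) = 1 - mm" using m_neg[OF m1 x] by auto
  obtain v where v: "v \<in> x" using VH_ne[OF x(1)] by blast
  have "lev {v} = card x - 1" using L0sing[OF x(1) l0 v] .
  moreover have "{v} \<in> VH" by (rule VH_sub[OF x(1)]) (use v in auto)
  ultimately show ?thesis using D_le[of "{v}"] D_sing cx by simp
qed

lemma D_step: "a \<in> VH \<Longrightarrow> b \<in> VH \<Longrightarrow> adj a b \<Longrightarrow> even (D b - D a)"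
proof -
  assume ab: "a \<in> VH" "b \<in> VH" "adj a b"
  have l: "lev b = Suc (lev a) \<or> lev a = Suc (lev b)" using L1[OF ab] .
  have "int (card b) = int (card a) + 1 \<or> int (card b) = int (card a) - 1"
  proof (rule adj_cases[OF ab])
    fix c assume "c \<in> a" "b = a - {c}"
    then show ?thesis using card_rem_int[OF VH_fin[OF ab(1)]] by simp
  next
    fix c assume "c \<notin> a" "b = insert c a"
    then show ?thesis using VH_fin[OF ab(1)] by simp
  qed
  moreover have "int (lev b) = int (lev a) + 1 \<or> int (lev b) = int (lev a) - 1" using l by auto
  moreover have "D b - D a = (int (lev b) - int (lev a)) - (int (card b) - int (card a))"
    unfolding D_def by simp
  ultimately have "D b - D a = 0 \<or> D b - D a = 2 \<or> D b - D a = -2" by auto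
  then show ?thesis by (metis dvd_0_right even_numeral even_minus)
qed

theorem all_eq:
  assumes noeven: "\<forall>x\<in>VH. \<not> is_even_cycle (component VH adj x) adj"
  shows "\<forall>x\<in>VH. lev x + 1 = card x"
proof (rule ccontr)
  assume "\<not> (\<forall>x\<in>VH. lev x + 1 = card x)"
  then obtain x0 where x0: "x0 \<in> VH" "lev x0 + 1 \<noteq> card x0" by blast
  have ne: "VH \<noteq> {}" using x0 by blast
  have Dx0: "D x0 \<noteq> 0" using x0 unfolding D_def by simp
  have M1: "MM \<ge> 1"
  proof (cases "D x0 > 0")
    case True then show ?thesis using D_le[OF x0(1)] by simp
  next
    case False
    then have "mm \<le> -1" using D_ge[OF x0(1)] Dx0 by simp
    then show ?thesis using m_M[OF _ ne] by simp
  qed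
  have M: "MM = 1" using M1 M_le1[OF ne] by fastforce
  have mlo: "mm \<ge> -1"
  proof (rule ccontr)
    assume "\<not> mm \<ge> -1"
    then have "mm \<le> -1" by simp
    then show False using m_M[OF _ ne] M \<open>\<not> mm \<ge> -1\<close> by simp
  qed
  obtain x1 where x1: "x1 \<in> VH" "D x1 = MM" using MM_att[OF ne] by blast
  have "card x1 = 1" using DM_single[OF x1 M1] .
  then obtain v where x1v: "x1 = {v}" using card_1_singletonE by blast
  have v: "{v} \<in> VH" "D {v} = 1" using x1 x1v M by auto
  define C where "C = component VH adj {v}"
  have par: "odd (D y)" if "y \<in> C" for y
    using that unfolding C_def
  proof (rule component_induct)
    show "odd (D {v})" using v by simp
  next
    fix a b assume "a \<in> VH" "b \<in> VH" "adj a b" "odd (D a)"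
    then show "odd (D b)" using D_step[of a b] by (metis even_add diff_add_cancel)
  qed
  have CV: "C \<subseteq> VH" unfolding C_def by (rule component_sub)
  have Dy: "D y = 1 \<or> D y = -1" if "y \<in> C" for y
  proof -
    have "mm \<le> D y" "D y \<le> 1" using D_ge D_le M that CV by auto
    then have "D y \<in> {-1, 0, 1}" using mlo by auto
    then show ?thesis using par[OF that] by auto
  qed
  have deg: "card {z \<in> VH. adj y z} = 2" if yC: "y \<in> C" for y
  proof -
    have yV: "y \<in> VH" using yC CV by blast
    show ?thesis
    proof (cases "D y = 1")
      case True
      then have "card y = 1" using DM_single[OF yV] M by simp
      then obtain u where yu: "y = {u}" using card_1_singletonE by blast
      have u: "{u} \<in> VH" "D {u} = MM" using yV True yu M by auto
      have "{z \<in> VH. adj {u} z} = dn {u}" using sing_nbrs(1)[OF u M1] .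
      moreover have "lev {u} = 1" using u(2) M D_sing by simp
      ultimately show ?thesis using L2[OF u(1)] yu by simp
    next
      case False
      then have Dm: "D y = -1" using Dy[OF yC] by simp
      then have mm1: "mm = -1" using D_ge[OF yV] mlo by simp
      have cy: "card y = 2" using m_neg(2)[of y] mm1 yV Dm by simp
      have noext: "\<And>t. t \<notin> y \<Longrightarrow> insert t y \<notin> VH" using m_neg(3)[of y] mm1 yV Dm by simp
      have "{z \<in> VH. adj y z} = (\<lambda>a. y - {a}) ` y"
      proof
        show "{z \<in> VH. adj y z} \<subseteq> (\<lambda>a. y - {a}) ` y"
        proof
          fix z assume "z \<in> {z \<in> VH. adj y z}"
          then have z: "z \<in> VH" "adj y z" by auto
          from adj_cases[OF yV z] show "z \<in> (\<lambda>a. y - {a}) ` y"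
          proof cases
            case (1 a) then show ?thesis by blast
          next
            case (2 b) then show ?thesis using noext z by blast
          qed
        qed
        show "(\<lambda>a. y - {a}) ` y \<subseteq> {z \<in> VH. adj y z}"
          using rem_V[OF yV] cy adj_rem by auto
      qed
      moreover have "inj_on (\<lambda>a. y - {a}) y" by (rule inj_onI) blast
      ultimately show ?thesis using card_image cy by metis
    qed
  qed
  have "is_even_cycle C adj" unfolding C_def
  proof (rule cycle_lemma[OF finVH _ adj_irr v(1), where col = "\<lambda>y. odd (card y)"])
    fix x y assume "adj x y" then show "adj y x" by (rule adj_symI)
  next
    fix y assume "y \<in> component VH adj {v}"
    then have "y \<in> C" unfolding C_def .
    then show "card {z \<in> VH. adj y z} = 2" by (rule deg)
  next
    fix y z assume yz: "y \<in> component VH adj {v}" "z \<in> VH" "adj y z"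
    then have yV: "y \<in> VH" using component_sub[of VH adj "{v}"] by blast
    have "int (card z) = int (card y) + 1 \<or> int (card z) = int (card y) - 1"
    proof (rule adj_cases[OF yV yz(2,3)])
      fix c assume "c \<in> y" "z = y - {c}"
      then show ?thesis using card_rem_int[OF VH_fin[OF yV]] by simp
    next
      fix c assume "c \<notin> y" "z = insert c y"
      then show ?thesis using VH_fin[OF yV] by simp
    qed
    then have "card z = Suc (card y) \<or> card y = Suc (card z)" by linarith
    then show "odd (card y) \<noteq> odd (card z)" by auto
  qed
  then show False using noeven v(1) unfolding C_def by blast
qed

end


lemma adj_card:
  assumes "finite x" "finite y" "IAR_adj x y"
  shows "(y \<subseteq> x \<and> card y + 1 = card x) \<or> (x \<subseteq> y \<and> card x + 1 = card y)"
proof -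
  have "(\<exists>a\<in>x. y = x - {a}) \<or> (\<exists>b. b \<notin> x \<and> y = insert b x)" using adj_iff assms by blast
  then show ?thesis
  proof
    assume "\<exists>a\<in>x. y = x - {a}"
    then obtain a where "a \<in> x" "y = x - {a}" by blast
    then show ?thesis using assms(1) card_Suc_Diff1 by fastforce
  next
    assume "\<exists>b. b \<notin> x \<and> y = insert b x"
    then obtain b where "b \<notin> x" "y = insert b x" by blast
    then show ?thesis using assms(1) by auto
  qed
qed

lemma indep_fin: "finite V \<Longrightarrow> finite {S. indep_set V E S}"
proof -
  assume "finite V"
  have "{S. indep_set V E S} \<subseteq> Pow V" unfolding indep_set_def by blast
  moreover have "finite (Pow V)" using \<open>finite V\<close> by simp
  ultimately show ?thesis by (rule finite_subset)
qed

lemma indep_empty: "indep_set V E {}" unfolding indep_set_def by simp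

lemma indep_sub: "indep_set V E S \<Longrightarrow> T \<subseteq> S \<Longrightarrow> indep_set V E T"
  unfolding indep_set_def by blast

lemma indep_max:
  assumes "finite V" "indep_set V E S"
  shows "card S \<le> indep_number V E"
  unfolding indep_number_def
  by (rule Max_ge) (use assms indep_fin[OF assms(1), of E] in auto)

lemma indep_att:
  assumes "finite V"
  shows "\<exists>S. indep_set V E S \<and> card S = indep_number V E"
proof -
  have "Max (card ` {S. indep_set V E S}) \<in> card ` {S. indep_set V E S}"
    using indep_fin[OF assms] indep_empty by (intro Max_in) auto
  then show ?thesis unfolding indep_number_def by auto
qed

lemma indep_finite: "finite V \<Longrightarrow> indep_set V E S \<Longrightarrow> finite S"
  unfolding indep_set_def using finite_subset by blast

lemma IAR_verts_card:
  "finite V \<Longrightarrow> S \<in> IAR_verts V E \<longleftrightarrow> indep_set V E S \<and> 1 \<le> card S"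
  unfolding IAR_verts_def using indep_finite by (auto simp: Suc_le_eq card_gt_0_iff)

context lay begin

lemma Ls_eq:
  assumes eq: "\<forall>x\<in>VH. lev x + 1 = card x"
  shows "Ls = map (\<lambda>i. {S. indep_set V E S \<and> card S = i}) [1..<indep_number V E + 1]"
proof -
  define \<alpha> where "\<alpha> = indep_number V E"
  have len: "length Ls = \<alpha>"
  proof (rule antisym)
    show "length Ls \<le> \<alpha>"
    proof (rule ccontr)
      assume "\<not> length Ls \<le> \<alpha>"
      then have "\<alpha> < length Ls" by simp
      then have "Ls ! \<alpha> \<noteq> {}" using layer_facts_1 by blast
      then obtain x where x: "x \<in> Ls ! \<alpha>" by blast
      then have xV: "x \<in> VH" using Ls_sub \<open>\<alpha> < length Ls\<close> by blast
      then have "lev x = \<alpha>" using lev_eq[OF \<open>\<alpha> < length Ls\<close> x] by simp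
      then have "card x = \<alpha> + 1" using eq xV by force
      moreover have "card x \<le> \<alpha>" unfolding \<alpha>_def
        using indep_max[OF finV] xV unfolding IAR_verts_def by blast
      ultimately show False by simp
    qed
    show "\<alpha> \<le> length Ls"
    proof (cases "\<alpha> = 0")
      case True then show ?thesis by simp
    next
      case False
      obtain S where S: "indep_set V E S" "card S = \<alpha>" using indep_att[OF finV] \<alpha>_def by blast
      then have "S \<in> VH" using IAR_verts_card[OF finV] False by simp
      then have "lev S < length Ls" "lev S + 1 = \<alpha>" using lev_ok eq S by auto
      then show ?thesis by simp
    qed
  qed
  show ?thesis
  proof (rule nth_equalityI)
    show "length Ls = length (map (\<lambda>i. {S. indep_set V E S \<and> card S = i}) [1..<indep_number V E + 1])"
      using len \<alpha>_def by simp
    fix i assume i: "i < length Ls"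
    have "Ls ! i = {y \<in> VH. lev y = i}" using layer_eq[OF i] .
    also have "\<dots> = {S. indep_set V E S \<and> card S = i + 1}"
      using eq IAR_verts_card[OF finV] by force
    also have "\<dots> = map (\<lambda>i. {S. indep_set V E S \<and> card S = i}) [1..<indep_number V E + 1] ! i"
      using i len \<alpha>_def by (simp del: upt_Suc add: add.commute)
    finally show "Ls ! i = map (\<lambda>i. {S. indep_set V E S \<and> card S = i}) [1..<indep_number V E + 1] ! i" .
  qed
qed

end


lemma card_le_one_sub: "A \<subseteq> {b} \<Longrightarrow> card A \<le> 1"
proof -
  assume "A \<subseteq> {b}"
  then have "card A \<le> card {b}" by (intro card_mono) auto
  then show ?thesis by simp
qed

lemma s_layering:
  assumes finV: "finite V"
  shows "layering (IAR_verts V E) IAR_adj (map (\<lambda>i. {S. indep_set V E S \<and> card S = i}) [1..<indep_number V E + 1])"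
proof -
  define \<alpha> where "\<alpha> = indep_number V E"
  define LL where "LL i = {S. indep_set V E S \<and> card S = i}" for i
  define Lf where "Lf = map LL [1..<\<alpha>+1]"
  have Lf_eq: "map (\<lambda>i. {S. indep_set V E S \<and> card S = i}) [1..<indep_number V E + 1] = Lf"
    unfolding Lf_def LL_def \<alpha>_def by simp
  have lenf: "length Lf = \<alpha>" unfolding Lf_def by simp
  have nthf: "Lf ! i = LL (Suc i)" if "i < \<alpha>" for i
    unfolding Lf_def using that by (simp del: upt_Suc)
  have finS: "finite S" if "indep_set V E S" for S using indep_finite[OF finV that] .
  have amax: "card S \<le> \<alpha>" if "indep_set V E S" for S using indep_max[OF finV that] \<alpha>_def by simp
  have VHc: "S \<in> IAR_verts V E \<longleftrightarrow> indep_set V E S \<and> 1 \<le> card S" for S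
    using IAR_verts_card[OF finV] .
  have c1: "\<forall>i<length Lf. Lf ! i \<noteq> {}"
  proof (intro allI impI)
    fix i assume "i < length Lf"
    then have i: "i < \<alpha>" using lenf by simp
    obtain S0 where S0: "indep_set V E S0" "card S0 = \<alpha>" using indep_att[OF finV] \<alpha>_def by blast
    have "Suc i \<le> card S0" using S0 i by simp
    then obtain T where T: "T \<subseteq> S0" "card T = Suc i" using obtain_subset_with_card_n by metis
    then have "T \<in> LL (Suc i)" unfolding LL_def using indep_sub[OF S0(1) T(1)] by simp
    then show "Lf ! i \<noteq> {}" using nthf[OF i] by auto
  qed
  have c2: "\<Union>(set Lf) = IAR_verts V E"
  proof
    show "\<Union>(set Lf) \<subseteq> IAR_verts V E"
    proof
      fix x assume "x \<in> \<Union>(set Lf)"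
      then obtain i where "i < length Lf" "x \<in> Lf ! i" by (metis Union_iff in_set_conv_nth)
      then show "x \<in> IAR_verts V E" using nthf lenf VHc unfolding LL_def by auto
    qed
    show "IAR_verts V E \<subseteq> \<Union>(set Lf)"
    proof
      fix x assume "x \<in> IAR_verts V E"
      then have x: "indep_set V E x" "1 \<le> card x" using VHc by auto
      define i where "i = card x - 1"
      have "card x \<le> \<alpha>" using amax x(1) .
      then have i: "i < \<alpha>" "card x = Suc i" using x i_def by auto
      then have "x \<in> Lf ! i" using nthf x unfolding LL_def by simp
      then show "x \<in> \<Union>(set Lf)" using i lenf by (metis UnionI nth_mem)
    qed
  qed
  have c3: "\<forall>i<length Lf. \<forall>j<length Lf. i \<noteq> j \<longrightarrow> Lf ! i \<inter> Lf ! j = {}"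
    using nthf lenf unfolding LL_def by auto
  have adjc: "(y \<subseteq> x \<and> card y + 1 = card x) \<or> (x \<subseteq> y \<and> card x + 1 = card y)"
    if "indep_set V E x" "indep_set V E y" "IAR_adj x y" for x y
    using adj_card finS that by blast
  have c4: "\<forall>i<length Lf. \<forall>x\<in>Lf ! i. \<forall>y\<in>Lf ! i. \<not> IAR_adj x y"
  proof (intro allI impI ballI notI)
    fix i x y assume "i < length Lf" "x \<in> Lf ! i" "y \<in> Lf ! i" "IAR_adj x y"
    then show False using nthf lenf adjc unfolding LL_def by fastforce
  qed
  have c5: "\<forall>x\<in>IAR_verts V E. \<forall>y\<in>IAR_verts V E. IAR_adj x y \<longrightarrow>
        (\<exists>i. Suc i < length Lf \<and> ((x \<in> Lf ! i \<and> y \<in> Lf ! Suc i) \<or> (y \<in> Lf ! i \<and> x \<in> Lf ! Suc i)))"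
  proof (intro ballI impI)
    fix x y assume xy: "x \<in> IAR_verts V E" "y \<in> IAR_verts V E" "IAR_adj x y"
    have ix: "indep_set V E x" "1 \<le> card x" and iy: "indep_set V E y" "1 \<le> card y" using xy VHc by auto
    have "(y \<subseteq> x \<and> card y + 1 = card x) \<or> (x \<subseteq> y \<and> card x + 1 = card y)" using adjc ix iy xy by blast
    then show "\<exists>i. Suc i < length Lf \<and> ((x \<in> Lf ! i \<and> y \<in> Lf ! Suc i) \<or> (y \<in> Lf ! i \<and> x \<in> Lf ! Suc i))"
    proof
      assume h: "y \<subseteq> x \<and> card y + 1 = card x"
      define i where "i = card y - 1"
      have "card x \<le> \<alpha>" using amax[OF ix(1)] .
      then have "Suc i < \<alpha>" using h iy i_def by auto
      moreover have "y \<in> Lf ! i" "x \<in> Lf ! Suc i" using nthf \<open>Suc i < \<alpha>\<close> ix iy h i_def unfolding LL_def by auto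
      ultimately show ?thesis using lenf by blast
    next
      assume h: "x \<subseteq> y \<and> card x + 1 = card y"
      define i where "i = card x - 1"
      have "card y \<le> \<alpha>" using amax[OF iy(1)] .
      then have "Suc i < \<alpha>" using h ix i_def by auto
      moreover have "x \<in> Lf ! i" "y \<in> Lf ! Suc i" using nthf \<open>Suc i < \<alpha>\<close> ix iy h i_def unfolding LL_def by auto
      ultimately show ?thesis using lenf by blast
    qed
  qed
  have c6: "\<forall>i. 1 \<le> i \<and> i < length Lf \<longrightarrow> (\<forall>x\<in>Lf ! i. card {y \<in> Lf ! (i - 1). IAR_adj x y} = i + 1)"
  proof (intro allI impI ballI)
    fix i x assume i: "1 \<le> i \<and> i < length Lf" and x: "x \<in> Lf ! i"
    have ia: "i < \<alpha>" using i lenf by simp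
    have xi: "indep_set V E x" "card x = Suc i" using x nthf[OF ia] unfolding LL_def by auto
    have fx: "finite x" using finS xi by blast
    have Li: "Lf ! (i - 1) = LL i" using nthf[of "i - 1"] ia i by simp
    have "{y \<in> Lf ! (i - 1). IAR_adj x y} = (\<lambda>a. x - {a}) ` x"
    proof
      show "{y \<in> Lf ! (i - 1). IAR_adj x y} \<subseteq> (\<lambda>a. x - {a}) ` x"
      proof
        fix y assume "y \<in> {y \<in> Lf ! (i - 1). IAR_adj x y}"
        then have y: "indep_set V E y" "card y = i" "IAR_adj x y" using Li unfolding LL_def by auto
        have "(\<exists>a\<in>x. y = x - {a}) \<or> (\<exists>b. b \<notin> x \<and> y = insert b x)" using adj_iff fx finS y by blast
        moreover have "\<not> (\<exists>b. b \<notin> x \<and> y = insert b x)" using y xi fx by auto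
        ultimately show "y \<in> (\<lambda>a. x - {a}) ` x" by blast
      qed
      show "(\<lambda>a. x - {a}) ` x \<subseteq> {y \<in> Lf ! (i - 1). IAR_adj x y}"
      proof
        fix y assume "y \<in> (\<lambda>a. x - {a}) ` x"
        then obtain a where a: "a \<in> x" "y = x - {a}" by blast
        have "indep_set V E y" using indep_sub[OF xi(1)] a by blast
        moreover have "card y = i" using a xi fx by simp
        moreover have "IAR_adj x y" using a adj_rem by simp
        ultimately show "y \<in> {y \<in> Lf ! (i - 1). IAR_adj x y}" using Li unfolding LL_def by simp
      qed
    qed
    moreover have "inj_on (\<lambda>a. x - {a}) x" by (rule inj_onI) blast
    then have "card ((\<lambda>a. x - {a}) ` x) = card x" by (rule card_image)
    ultimately show "card {y \<in> Lf ! (i - 1). IAR_adj x y} = i + 1" using xi by simp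
  qed
  have c7: "\<forall>i<length Lf. \<forall>x\<in>Lf ! i. \<forall>y\<in>Lf ! i. x \<noteq> y \<longrightarrow>
        (1 \<le> i \<longrightarrow> card {z \<in> Lf ! (i - 1). IAR_adj x z \<and> IAR_adj y z} \<le> 1) \<and>
        (Suc i < length Lf \<longrightarrow> card {z \<in> Lf ! Suc i. IAR_adj x z \<and> IAR_adj y z} \<le> 1)"
  proof (intro allI impI ballI conjI)
    fix i x y assume i: "i < length Lf" and x: "x \<in> Lf ! i" and y: "y \<in> Lf ! i" and xy: "x \<noteq> y"
    have ia: "i < \<alpha>" using i lenf by simp
    have xi: "indep_set V E x" "card x = Suc i" using x nthf[OF ia] unfolding LL_def by auto
    have yi: "indep_set V E y" "card y = Suc i" using y nthf[OF ia] unfolding LL_def by auto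
    have fx: "finite x" "finite y" using finS xi yi by auto
    have nxy: "\<not> x \<subseteq> y" "\<not> y \<subseteq> x" using xy xi yi fx card_subset_eq by metis+
    {
      assume i1: "1 \<le> i"
      have Li: "Lf ! (i - 1) = LL i" using nthf[of "i - 1"] ia i1 by simp
      have "{z \<in> Lf ! (i - 1). IAR_adj x z \<and> IAR_adj y z} \<subseteq> {x \<inter> y}"
      proof
        fix z assume "z \<in> {z \<in> Lf ! (i - 1). IAR_adj x z \<and> IAR_adj y z}"
        then have z: "indep_set V E z" "card z = i" "IAR_adj x z" "IAR_adj y z" using Li unfolding LL_def by auto
        have "z \<subseteq> x" using adjc[OF xi(1) z(1) z(3)] z xi by auto
        moreover have "z \<subseteq> y" using adjc[OF yi(1) z(1) z(4)] z yi by auto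
        ultimately have zs: "z \<subseteq> x \<inter> y" by blast
        have "x \<inter> y \<subset> x" using nxy(1) by auto
        then have "card (x \<inter> y) < card x" using psubset_card_mono[OF fx(1)] by blast
        then have "card (x \<inter> y) \<le> card z" using xi z by simp
        moreover have "finite (x \<inter> y)" using fx by simp
        ultimately have "z = x \<inter> y" using card_seteq[OF _ zs] by blast
        then show "z \<in> {x \<inter> y}" by simp
      qed
      then show "card {z \<in> Lf ! (i - 1). IAR_adj x z \<and> IAR_adj y z} \<le> 1"
        by (rule card_le_one_sub)
    }
    {
      assume i2: "Suc i < length Lf"
      have Li: "Lf ! Suc i = LL (Suc (Suc i))" using nthf[of "Suc i"] i2 lenf by simp
      have "{z \<in> Lf ! Suc i. IAR_adj x z \<and> IAR_adj y z} \<subseteq> {x \<union> y}"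
      proof
        fix z assume "z \<in> {z \<in> Lf ! Suc i. IAR_adj x z \<and> IAR_adj y z}"
        then have z: "indep_set V E z" "card z = Suc (Suc i)" "IAR_adj x z" "IAR_adj y z" using Li unfolding LL_def by auto
        have fz: "finite z" using finS z by blast
        have "x \<subseteq> z" using adjc[OF xi(1) z(1) z(3)] z xi by auto
        moreover have "y \<subseteq> z" using adjc[OF yi(1) z(1) z(4)] z yi by auto
        ultimately have zs: "x \<union> y \<subseteq> z" by blast
        have "x \<subset> x \<union> y" using nxy(2) by auto
        have fxy: "finite (x \<union> y)" using fx by simp
        have "card x < card (x \<union> y)" using psubset_card_mono[OF fxy \<open>x \<subset> x \<union> y\<close>] .
        then have "card z \<le> card (x \<union> y)" using xi z by simp
        then have "x \<union> y = z" using card_seteq[OF fz zs] by blast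
        then show "z \<in> {x \<union> y}" by simp
      qed
      then show "card {z \<in> Lf ! Suc i. IAR_adj x z \<and> IAR_adj y z} \<le> 1"
        by (rule card_le_one_sub)
    }
  qed
  show ?thesis unfolding Lf_eq layering_def using c1 c2 c3 c4 c5 c6 c7 by blast
qed


theorem lemma4p4:
  fixes V :: "'a set" and E :: "'a \<Rightarrow> 'a \<Rightarrow> bool"
  assumes "finite V"
    and "simple_graph V E"
    and "\<forall>x\<in>IAR_verts V E. \<not> is_even_cycle (component (IAR_verts V E) IAR_adj x) IAR_adj"
  shows "layering (IAR_verts V E) IAR_adj
           (map (\<lambda>i. {S. indep_set V E S \<and> card S = i}) [1..<indep_number V E + 1])
     \<and> (\<forall>Ls. layering (IAR_verts V E) IAR_adj Ls \<longrightarrow>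
           Ls = map (\<lambda>i. {S. indep_set V E S \<and> card S = i}) [1..<indep_number V E + 1])"
proof -
  have p1: "layering (IAR_verts V E) IAR_adj
           (map (\<lambda>i. {S. indep_set V E S \<and> card S = i}) [1..<indep_number V E + 1])"
    by (rule s_layering[OF assms(1)])
  have p2: "\<forall>Ls. layering (IAR_verts V E) IAR_adj Ls \<longrightarrow>
           Ls = map (\<lambda>i. {S. indep_set V E S \<and> card S = i}) [1..<indep_number V E + 1]"
  proof (intro allI impI)
    fix Ls assume "layering (IAR_verts V E) IAR_adj Ls"
    then have L: "lay V E Ls" using assms(1) by (simp add: lay_def)
    show "Ls = map (\<lambda>i. {S. indep_set V E S \<and> card S = i}) [1..<indep_number V E + 1]"
      using lay.Ls_eq[OF L lay.all_eq[OF L assms(3)]] .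
  qed
  show ?thesis using p1 p2 by blast
qed


end
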